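(* Let $d\ge 2$, let $c_d$ be the unique positive solution of $g_d(x)=d+1$ where $g_d(x)=(d+1)(x+1)e^{-x}+x(1-e^{-x})^{d+1}$, let $c>c_d$ and $p=\frac{c}{n}$. For $Y\in Y_d(n,p)$ define $$v(Y)=f_d(Y)+a(Y)+\sum_{j=0}^{d}\alpha_j(Y)(d-j)-\binom{n}{d},$$ where $f_d(Y)$ is the number of $d$-simplices of $Y$, $a(Y)$ is the number of $(d-1)$-simplices $\tau$ of $\Delta_{n-1}$ contained in no $d$-simplex of $Y$, and $\alpha_j(Y)$ is the number of $d$-simplices of $Y$ that contain exactly $d+1-j$ of their $(d-1)$-faces which are contained in exactly one $d$-simplex of $Y$. Then $$\lim_{n\to\infty}\Pr\big[Y\in Y_d(n,p): v(Y)\le 0\big]=0.$$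
   Context: $\Delta_{n-1}$ denotes the $(n-1)$-dimensional simplex on vertex set $[n]$, and $\Delta_{n-1}^{(i)}$ its $i$-skeleton. $Y_d(n,p)$ is the probability space of complexes $\Delta_{n-1}^{(d-1)}\subset Y\subset\Delta_{n-1}^{(d)}$ in which each $d$-simplex is included independently with probability $p$. *)

theory Defs
  imports Complex_Main
begin

text \<open>A complex Y in Y_d(n,p)
is identified with its set of d-simplices (the full (d-1)-skeleton is always present).\<close>

definition dsimplices :: "nat \<Rightarrow> nat \<Rightarrow> nat set set" where
  "dsimplices n d = {s. s \<subseteq> {..<n} \<and> card s = d + 1}"

definition ridges :: "nat \<Rightarrow> nat \<Rightarrow> nat set set" where
  "ridges n d = {t. t \<subseteq> {..<n} \<and> card t = d}"

definition cdeg :: "nat set set \<Rightarrow> nat set \<Rightarrow> nat" where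
  "cdeg Y t = card {s \<in> Y. t \<subseteq> s}"

definition a_count :: "nat \<Rightarrow> nat \<Rightarrow> nat set set \<Rightarrow> nat" where
  "a_count n d Y = card {t \<in> ridges n d. cdeg Y t = 0}"

definition alpha_count :: "nat \<Rightarrow> nat \<Rightarrow> nat set set \<Rightarrow> nat" where
  "alpha_count d j Y =
     card {s \<in> Y. card {t. t \<subseteq> s \<and> card t = d \<and> cdeg Y t = 1} = d + 1 - j}"

definition v_fun :: "nat \<Rightarrow> nat \<Rightarrow> nat set set \<Rightarrow> int" where
  "v_fun n d Y = int (card Y) + int (a_count n d Y)
     + (\<Sum>j = 0..d. int (alpha_count d j Y) * int (d - j)) - int (n choose d)"

definition g_fun :: "nat \<Rightarrow> real \<Rightarrow> real" where
  "g_fun d x = (real d + 1) * (x + 1) * exp (- x) + x * (1 - exp (- x)) ^ (d + 1)"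

definition c_crit :: "nat \<Rightarrow> real" where
  "c_crit d = (THE x. x > 0 \<and> g_fun d x = real d + 1)"

text \<open>Probability in Y_d(n,p) of the event P: each d-simplex included independently with prob. p.\<close>
definition prob_Yd :: "nat \<Rightarrow> nat \<Rightarrow> real \<Rightarrow> (nat set set \<Rightarrow> bool) \<Rightarrow> real" where
  "prob_Yd n d p P =
     (\<Sum>Y \<in> {Y. Y \<subseteq> dsimplices n d \<and> P Y}.
        p ^ card Y * (1 - p) ^ (card (dsimplices n d) - card Y))"

end

theory Submission
  imports Defs "HOL-Probability.Probability" "HOL-Real_Asymp.Real_Asymp"
begin

lemma exp_cubic_lower: "0 \<le> (x::real) \<Longrightarrow> 1 + x + x^2/2 + x^3/6 \<le> exp x"
proof -
  assume x: "0 \<le> x"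
  obtain t where "\<bar>t\<bar> \<le> \<bar>x\<bar>" and e: "exp x = (\<Sum>m<4. (x ^ m) / fact m) + (exp t / fact 4) * x ^ 4"
    using Maclaurin_exp_le[of x 4] by blast
  have "(\<Sum>m<4. (x ^ m) / fact m) = 1 + x + x^2/2 + x^3/6"
    by (simp add: eval_nat_numeral fact_numeral)
  moreover have "(exp t / fact 4) * x ^ 4 \<ge> 0" using x by simp
  ultimately show ?thesis using e by linarith
qed

lemma exp_neg_upper: "0 \<le> (x::real) \<Longrightarrow> exp (-x) \<le> 1 - x + x^2/2"
proof -
  assume x: "0 \<le> x"
  obtain t where "\<bar>t\<bar> \<le> \<bar>-x\<bar>" and e: "exp (-x) = (\<Sum>m<3. ((-x) ^ m) / fact m) + (exp t / fact 3) * (-x) ^ 3"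
    using Maclaurin_exp_le[of "-x" 3] by blast
  have "(\<Sum>m<3. ((-x) ^ m) / fact m) = 1 - x + x^2/2"
    by (simp add: eval_nat_numeral fact_numeral)
  moreover have "(exp t / fact 3) * (-x) ^ 3 \<le> 0" using x by (simp add: mult_nonneg_nonneg)
  ultimately show ?thesis using e by linarith
qed

lemma key_ineq:
  assumes x: "(x::real) > 0"
  shows "(exp x - 1)^2 + 2*x*(exp x - 1) - 3*x^2 - x^2*(exp x - 1) > 0"
proof -
  define E where "E = exp x - 1"
  define E0 where "E0 = x + x^2/2 + x^3/6"
  have EE0: "E \<ge> E0" using exp_cubic_lower[of x] x unfolding E_def E0_def by simp
  have "E0*E0 + E0*(2*x - x^2) - 3*x^2 = x^3 + (5/12)*x^4 + x^6/36"
    unfolding E0_def by (simp add: field_simps eval_nat_numeral)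
  moreover have "x^3 + (5/12)*x^4 + x^6/36 > 0" using x by (simp add: add_pos_nonneg)
  moreover have "E*E + E*(2*x-x^2) - (E0*E0 + E0*(2*x-x^2)) = (E - E0)*(E + E0 + 2*x - x^2)"
    by (simp add: algebra_simps)
  moreover have "E + E0 + 2*x - x^2 \<ge> 0"
  proof -
    have "E0 \<ge> x^2/2" unfolding E0_def using x by (simp add: add_nonneg_nonneg)
    thus ?thesis using EE0 x by (simp add: power2_eq_square) 
  qed
  ultimately have "E*E + E*(2*x-x^2) - 3*x^2 > 0"
    using EE0 by (smt (verit) mult_nonneg_nonneg)
  thus ?thesis unfolding E_def by (simp add: power2_eq_square algebra_simps)
qed

definition uu :: "real \<Rightarrow> real" where "uu x = 1 - (1 + x) * exp (-x)"
definition rr :: "nat \<Rightarrow> real \<Rightarrow> real" where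
  "rr d x = x * (1 - exp (-x))^(d+1) / uu x"

lemma exp_gt_lin: "x > 0 \<Longrightarrow> 1 + x < exp (x::real)"
proof -
  assume x: "x > 0"
  have "x^2/2 > 0" using x by simp
  thus ?thesis using exp_lower_Taylor_quadratic[of x] x by linarith
qed

lemma uu_pos: "x > 0 \<Longrightarrow> uu x > 0"
proof -
  assume x: "x > 0"
  have "(1 + x) * exp (-x) < exp x * exp (-x)"
    using exp_gt_lin[OF x] by simp
  thus ?thesis unfolding uu_def by (simp add: exp_minus_inverse)
qed

lemma rr_deriv_pos:
  assumes d: "d \<ge> 2" and x: "x > 0"
  shows "\<exists>y. DERIV (rr d) x :> y \<and> y > 0"
proof -
  define q where "q = exp (-x)"
  have q0: "q > 0" "q < 1" using x unfolding q_def by auto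
  have u: "uu x > 0" using uu_pos[OF x] .
  have uq: "uu x = 1 - (1+x)*q" unfolding uu_def q_def by simp
  define D where "D = (1-q)^d * (((1-q) + (real d+1)*x*q)*uu x - x^2*q*(1-q)) / (uu x)^2"
  have der: "DERIV (rr d) x :> D"
  proof -
    have "DERIV (\<lambda>x. x * (1 - exp (-x))^(d+1) / uu x) x :>
       ((1 * (1 - exp (-x))^(d+1) + x * (real (d+1) * (1 - exp (-x))^d * exp (-x))) * uu x
        - x * (1 - exp (-x))^(d+1) * (x * exp (-x))) / (uu x)^2"
      unfolding uu_def
      apply (rule derivative_eq_intros refl | simp)+
      using u unfolding uu_def apply simp
      apply (simp add: field_simps power2_eq_square)
      done
    moreover have "((1 * (1 - exp (-x))^(d+1) + x * (real (d+1) * (1 - exp (-x))^d * exp (-x))) * uu x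
        - x * (1 - exp (-x))^(d+1) * (x * exp (-x))) / (uu x)^2 = D"
      unfolding D_def q_def[symmetric] by (simp add: field_simps power2_eq_square)
    ultimately show ?thesis unfolding rr_def[abs_def] by simp
  qed
  have key: "(exp x - 1)^2 + 2*x*(exp x - 1) - 3*x^2 - x^2*(exp x - 1) > 0" using key_ineq[OF x] .
  have eq: "exp x * q = 1" unfolding q_def by (simp add: exp_minus_inverse)
  have "(1-q)*uu x + 3*x*q*uu x - x^2*q*(1-q) > 0"
  proof -
    define y where "y = exp x"
    have y: "y > 0" "y * q = 1" using eq unfolding y_def by auto
    have qy: "q = 1/y" using y by (simp add: field_simps)
    have k: "(y - 1)^2 + 2*x*(y - 1) - 3*x^2 - x^2*(y - 1) > 0" using key unfolding y_def .
    have "(1-q)*uu x + 3*x*q*uu x - x^2*q*(1-q) = ((y - 1)^2 + 2*x*(y - 1) - 3*x^2 - x^2*(y - 1)) / y^2"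
      unfolding uq qy using y by (simp add: field_simps power2_eq_square)
    thus ?thesis using k y by simp
  qed
  moreover have "(real d+1)*x*q*uu x \<ge> 3*x*q*uu x"
    using d x q0 u by (intro mult_right_mono mult_mono) auto
  ultimately have "((1-q) + (real d+1)*x*q)*uu x - x^2*q*(1-q) > 0"
    by (simp add: algebra_simps)
  hence "D > 0" unfolding D_def using q0 u by (intro divide_pos_pos mult_pos_pos) auto
  with der show ?thesis by blast
qed

lemma rr_strict_mono:
  assumes d: "d \<ge> 2" and a: "0 < a" and ab: "a < b"
  shows "rr d a < rr d b"
  by (rule DERIV_pos_imp_increasing[OF ab]) (use a d rr_deriv_pos in auto)

lemma g_uu_rr: "x > 0 \<Longrightarrow> g_fun d x - (real d + 1) = uu x * (rr d x - (real d + 1))"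
  using uu_pos[of x] unfolding g_fun_def rr_def uu_def by (simp add: field_simps)

lemma g_low: assumes d: "d \<ge> 2" shows "g_fun d (1/2) < real d + 1"
proof -
  define q where "q = exp (-(1/2::real))"
  have q1: "q \<ge> 1/2" using exp_ge_add_one_self[of "-(1/2::real)"] unfolding q_def by simp
  have q2: "q \<le> 5/8" using exp_neg_upper[of "1/2"] unfolding q_def by (simp add: power2_eq_square)
  have "(1 - q)^(d+1) \<le> (1/2)^(d+1)" using q1 q2 by (intro power_mono) auto
  also have "(1/2::real)^(d+1) \<le> (1/2)^3" using d by (intro power_decreasing) auto
  finally have p: "(1 - q)^(d+1) \<le> 1/8" by (simp add: eval_nat_numeral)
  have u: "uu (1/2) \<ge> 1/16" unfolding uu_def q_def[symmetric] using q2 by simp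
  have "g_fun d (1/2) - (real d + 1) = (1/2) * (1 - q)^(d+1) - (real d + 1) * uu (1/2)"
    unfolding g_fun_def uu_def q_def by (simp add: field_simps)
  moreover have "(real d + 1) * uu (1/2) \<ge> 3 * (1/16)"
    using u d by (intro mult_mono) auto
  ultimately show ?thesis using p by linarith
qed

lemma g_high: assumes d: "d \<ge> 2" shows "g_fun d (4*(real d+1)) \<ge> real d + 1"
proof -
  define x where "x = 4*(real d+1)"
  define q where "q = exp (-x)"
  have x0: "x > 0" unfolding x_def by simp
  have "exp x \<ge> 1 + x" by (rule exp_ge_add_one_self)
  hence q1: "q \<le> 1/(1+x)" unfolding q_def using x0 by (simp add: exp_minus field_simps)
  have q0: "q > 0" unfolding q_def by simp
  have "1 + real (d+1) * (-q) \<le> (1 + (-q))^(d+1)"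
  proof (rule Bernoulli_inequality)
    have "1/(1+x) \<le> 1" using x0 by simp
    thus "-1 \<le> -q" using q1 by linarith
  qed
  moreover have "real (d+1) * q \<le> 1/4"
  proof -
    have "real (d+1) * q \<le> real (d+1) * (1/(1+x))" using q1 by (intro mult_left_mono) auto
    also have "\<dots> \<le> 1/4" unfolding x_def by (simp add: field_simps)
    finally show ?thesis .
  qed
  ultimately have b: "(1 - q)^(d+1) \<ge> 3/4" by simp
  have "g_fun d x \<ge> x * (1 - q)^(d+1)"
    unfolding g_fun_def q_def using x0 by (simp add: add_increasing)
  moreover have "x * (1 - q)^(d+1) \<ge> x * (3/4)" using b x0 by (intro mult_left_mono) auto
  ultimately show ?thesis unfolding x_def by simp
qed

lemma g_root_unique:
  assumes d: "d \<ge> 2" and x: "x > 0" "g_fun d x = real d + 1" and y: "y > 0" "g_fun d y = real d + 1"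
  shows "x = y"
proof -
  have "rr d x = real d + 1" using g_uu_rr[OF x(1), of d] x uu_pos[OF x(1)] by simp
  moreover have "rr d y = real d + 1" using g_uu_rr[OF y(1), of d] y uu_pos[OF y(1)] by simp
  ultimately show ?thesis using rr_strict_mono[OF d x(1), of y] rr_strict_mono[OF d y(1), of x]
    by (cases x y rule: linorder_cases) auto
qed

lemma c_crit_props:
  assumes d: "d \<ge> 2"
  shows "c_crit d > 0" "g_fun d (c_crit d) = real d + 1"
proof -
  have cont: "continuous_on {1/2 .. 4*(real d+1)} (g_fun d)"
    unfolding g_fun_def by (intro continuous_intros)
  obtain x where x: "1/2 \<le> x" "x \<le> 4*(real d+1)" "g_fun d x = real d + 1"
    using IVT'[of "g_fun d" "1/2" "real d + 1" "4*(real d+1)", OF _ g_high[OF d] _ cont] g_low[OF d]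
    by auto
  have "c_crit d = x" unfolding c_crit_def
  proof (rule the_equality)
    show "0 < x \<and> g_fun d x = real d + 1" using x by auto
    show "\<And>y. 0 < y \<and> g_fun d y = real d + 1 \<Longrightarrow> y = x"
      using g_root_unique[OF d] x by force
  qed
  thus "c_crit d > 0" "g_fun d (c_crit d) = real d + 1" using x by auto
qed

lemma g_above:
  assumes d: "d \<ge> 2" and c: "c > c_crit d"
  shows "c > 0" "g_fun d c > real d + 1"
proof -
  note cc = c_crit_props[OF d]
  show c0: "c > 0" using cc c by linarith
  have "rr d (c_crit d) = real d + 1"
    using g_uu_rr[OF cc(1), of d] cc uu_pos[OF cc(1)] by simp
  hence "rr d c > real d + 1" using rr_strict_mono[OF d cc(1) c] by simp
  hence "uu c * (rr d c - (real d + 1)) > 0" using uu_pos[OF c0] by simp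
  thus "g_fun d c > real d + 1" using g_uu_rr[OF c0, of d] by simp
qed

definition kk :: "nat \<Rightarrow> nat set set \<Rightarrow> nat set \<Rightarrow> nat" where
  "kk d Y s = card {t. t \<subseteq> s \<and> card t = d \<and> cdeg Y t = 1}"

lemma sum_ind_card: "finite A \<Longrightarrow> (\<Sum>x\<in>A. if P x then 1 else 0) = of_nat (card {x\<in>A. P x})"
  by (simp add: sum.If_cases Int_def)

lemma finite_dsimplices: "finite (dsimplices n d)"
  unfolding dsimplices_def by (rule finite_subset[of _ "Pow {..<n}"]) auto

lemma finite_ridges: "finite (ridges n d)"
  unfolding ridges_def by (rule finite_subset[of _ "Pow {..<n}"]) auto

lemma card_ridges: "card (ridges n d) = n choose d"
  unfolding ridges_def using n_subsets[of "{..<n}" d] by simp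

lemma kk_le:
  assumes "s \<in> dsimplices n d"
  shows "kk d Y s \<le> d + 1"
proof -
  have fs: "finite s" "card s = d+1" using assms unfolding dsimplices_def
    by (auto intro: finite_subset)
  have "kk d Y s \<le> card {t. t \<subseteq> s \<and> card t = d}"
    unfolding kk_def by (rule card_mono) (use fs in auto)
  also have "\<dots> = d + 1" using n_subsets[OF fs(1), of d] fs by simp
  finally show ?thesis .
qed

lemma alpha_sum:
  assumes Y: "Y \<subseteq> dsimplices n d"
  shows "(\<Sum>j = 0..d. int (alpha_count d j Y) * int (d - j))
         = (\<Sum>s\<in>Y. (if kk d Y s \<ge> 1 then int (kk d Y s) - 1 else 0))"
proof -
  have fY: "finite Y" using Y finite_dsimplices finite_subset by blast
  have "(\<Sum>j = 0..d. int (alpha_count d j Y) * int (d - j))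
      = (\<Sum>j = 0..d. \<Sum>s\<in>Y. (if kk d Y s = d + 1 - j then int (d - j) else 0))"
    unfolding alpha_count_def kk_def[symmetric]
    by (intro sum.cong refl) (simp add: sum.If_cases Int_def fY)
  also have "\<dots> = (\<Sum>s\<in>Y. \<Sum>j = 0..d. (if kk d Y s = d + 1 - j then int (d - j) else 0))"
    by (rule sum.swap)
  also have "\<dots> = (\<Sum>s\<in>Y. (if kk d Y s \<ge> 1 then int (kk d Y s) - 1 else 0))"
  proof (intro sum.cong refl)
    fix s assume s: "s \<in> Y"
    obtain k where k_def: "kk d Y s = k" by blast
    have kle: "k \<le> d + 1" unfolding k_def[symmetric] using kk_le s Y by blast
    show "(\<Sum>j = 0..d. (if kk d Y s = d + 1 - j then int (d - j) else 0))
        = (if kk d Y s \<ge> 1 then int (kk d Y s) - 1 else 0)"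
    proof (cases "k \<ge> 1")
      case True
      have "(\<Sum>j = 0..d. (if k = d + 1 - j then int (d - j) else 0))
          = (\<Sum>j = 0..d. (if j = d + 1 - k then int (d - j) else 0))"
        by (intro sum.cong refl) (use True kle in auto)
      also have "\<dots> = int (d - (d + 1 - k))" using True kle by (subst sum.delta) auto
      finally show ?thesis using True kle k_def by simp
    next
      case False
      thus ?thesis using k_def by (simp add: sum.neutral)
    qed
  qed
  finally show ?thesis .
qed

lemma sum_kk:
  assumes Y: "Y \<subseteq> dsimplices n d"
  shows "(\<Sum>s\<in>Y. kk d Y s) = card {t \<in> ridges n d. cdeg Y t = 1}"
proof -
  have fY: "finite Y" using Y finite_dsimplices finite_subset by blast
  have fR: "finite (ridges n d)" by (rule finite_ridges)
  have "(\<Sum>s\<in>Y. kk d Y s) = (\<Sum>s\<in>Y. \<Sum>t\<in>ridges n d. if t \<subseteq> s \<and> cdeg Y t = 1 then 1 else 0)"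
  proof (intro sum.cong refl)
    fix s assume s: "s \<in> Y"
    have "{t. t \<subseteq> s \<and> card t = d \<and> cdeg Y t = 1} = {t \<in> ridges n d. t \<subseteq> s \<and> cdeg Y t = 1}"
      using s Y unfolding ridges_def dsimplices_def by auto
    thus "kk d Y s = (\<Sum>t\<in>ridges n d. if t \<subseteq> s \<and> cdeg Y t = 1 then 1 else 0)"
      unfolding kk_def by (simp add: sum.If_cases Int_def fR)
  qed
  also have "\<dots> = (\<Sum>t\<in>ridges n d. \<Sum>s\<in>Y. if t \<subseteq> s \<and> cdeg Y t = 1 then 1 else 0)"
    by (rule sum.swap)
  also have "\<dots> = (\<Sum>t\<in>ridges n d. if cdeg Y t = 1 then 1 else 0)"
  proof (intro sum.cong refl)
    fix t assume t: "t \<in> ridges n d"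
    show "(\<Sum>s\<in>Y. if t \<subseteq> s \<and> cdeg Y t = 1 then 1 else 0) = (if cdeg Y t = 1 then 1 else (0::nat))"
    proof (cases "cdeg Y t = 1")
      case True
      have "(\<Sum>s\<in>Y. if t \<subseteq> s \<and> cdeg Y t = 1 then 1 else (0::nat)) = card {s\<in>Y. t \<subseteq> s}"
        using True by (simp add: sum.If_cases Int_def fY)
      thus ?thesis using True unfolding cdeg_def by simp
    qed simp
  qed
  also have "\<dots> = card {t \<in> ridges n d. cdeg Y t = 1}"
    by (simp add: sum.If_cases Int_def fR)
  finally show ?thesis .
qed

lemma v_identity:
  assumes Y: "Y \<subseteq> dsimplices n d"
  shows "v_fun n d Y = int (card {s\<in>Y. kk d Y s = 0}) - int (card {t \<in> ridges n d. cdeg Y t \<ge> 2})"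
proof -
  have fY: "finite Y" using Y finite_dsimplices finite_subset by blast
  have fR: "finite (ridges n d)" by (rule finite_ridges)
  define A0 where "A0 = card {t \<in> ridges n d. cdeg Y t = 0}"
  define A1 where "A1 = card {t \<in> ridges n d. cdeg Y t = 1}"
  define H where "H = card {t \<in> ridges n d. cdeg Y t \<ge> 2}"
  have part: "n choose d = A0 + A1 + H"
  proof -
    have "ridges n d = {t \<in> ridges n d. cdeg Y t = 0} \<union> {t \<in> ridges n d. cdeg Y t = 1}
        \<union> {t \<in> ridges n d. cdeg Y t \<ge> 2}" by auto
    moreover have "card ({t \<in> ridges n d. cdeg Y t = 0} \<union> {t \<in> ridges n d. cdeg Y t = 1}) = A0 + A1"
      unfolding A0_def A1_def by (rule card_Un_disjoint) (use fR in auto)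
    moreover have "card (({t \<in> ridges n d. cdeg Y t = 0} \<union> {t \<in> ridges n d. cdeg Y t = 1})
        \<union> {t \<in> ridges n d. cdeg Y t \<ge> 2}) = card ({t \<in> ridges n d. cdeg Y t = 0} \<union> {t \<in> ridges n d. cdeg Y t = 1}) + H"
      unfolding H_def by (rule card_Un_disjoint) (use fR in auto)
    ultimately have "card (ridges n d) = A0 + A1 + H" by simp
    thus ?thesis using card_ridges by simp
  qed
  have sY: "card Y = card {s\<in>Y. kk d Y s = 0} + card {s\<in>Y. kk d Y s \<ge> 1}"
  proof -
    have "Y = {s\<in>Y. kk d Y s = 0} \<union> {s\<in>Y. kk d Y s \<ge> 1}" by auto
    moreover have "{s\<in>Y. kk d Y s = 0} \<inter> {s\<in>Y. kk d Y s \<ge> 1} = {}" by auto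
    ultimately show ?thesis using fY card_Un_disjoint[of "{s\<in>Y. kk d Y s = 0}" "{s\<in>Y. kk d Y s \<ge> 1}"]
      by simp
  qed
  have asum: "(\<Sum>j = 0..d. int (alpha_count d j Y) * int (d - j))
      = int A1 - int (card {s\<in>Y. kk d Y s \<ge> 1})"
  proof -
    have "(\<Sum>s\<in>Y. (if kk d Y s \<ge> 1 then int (kk d Y s) - 1 else 0))
        = (\<Sum>s\<in>Y. int (kk d Y s) - (if kk d Y s \<ge> 1 then 1 else 0))"
      by (intro sum.cong refl) auto
    also have "\<dots> = (\<Sum>s\<in>Y. int (kk d Y s)) - (\<Sum>s\<in>Y. (if kk d Y s \<ge> 1 then 1 else 0))"
      by (rule sum_subtractf)
    also have "(\<Sum>s\<in>Y. int (kk d Y s)) = int A1"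
      using sum_kk[OF Y] unfolding A1_def by (metis of_nat_sum)
    also have "(\<Sum>s\<in>Y. (if kk d Y s \<ge> 1 then 1 else (0::int))) = int (card {s\<in>Y. kk d Y s \<ge> 1})"
      by (simp add: sum.If_cases Int_def fY)
    finally show ?thesis using alpha_sum[OF Y] by simp
  qed
  show ?thesis
    unfolding v_fun_def a_count_def A0_def[symmetric] asum H_def[symmetric]
    using part sY by simp
qed

definition depends_on :: "('a \<Rightarrow> 'b) set \<Rightarrow> 'a set \<Rightarrow> bool" where
  "depends_on E A \<longleftrightarrow> (\<forall>f g. (\<forall>x\<in>A. f x = g x) \<longrightarrow> (f \<in> E \<longleftrightarrow> g \<in> E))"

lemma prob_restrict:
  assumes D: "finite D" and A: "A \<subseteq> D" and dep: "depends_on E A"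
  shows "measure_pmf.prob (Pi_pmf D dflt p) E = measure_pmf.prob (Pi_pmf A dflt p) E"
proof -
  have "Pi_pmf A dflt p = map_pmf (\<lambda>f x. if x \<in> A then f x else dflt) (Pi_pmf D dflt p)"
    by (rule Pi_pmf_subset[OF D A])
  hence "measure_pmf.prob (Pi_pmf A dflt p) E
      = measure_pmf.prob (Pi_pmf D dflt p) ((\<lambda>f x. if x \<in> A then f x else dflt) -` E)" by simp
  also have "(\<lambda>f x. if x \<in> A then f x else dflt) -` E = E"
  proof -
    have "(\<lambda>x. if x \<in> A then f x else dflt) \<in> E \<longleftrightarrow> f \<in> E" for f
      using dep[unfolded depends_on_def, rule_format, of "\<lambda>x. if x \<in> A then f x else dflt" f] by auto
    thus ?thesis by auto
  qed
  finally show ?thesis by simp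
qed

lemma prob_indep2:
  assumes D: "finite D" and A: "A \<subseteq> D" and B: "B \<subseteq> D" and AB: "A \<inter> B = {}"
    and dA: "depends_on E A" and dB: "depends_on F B"
  shows "measure_pmf.prob (Pi_pmf D dflt p) (E \<inter> F) =
         measure_pmf.prob (Pi_pmf D dflt p) E * measure_pmf.prob (Pi_pmf D dflt p) F"
proof -
  have fA: "finite A" and fB: "finite B" using A B D finite_subset by auto
  have dAB: "depends_on (E \<inter> F) (A \<union> B)"
    unfolding depends_on_def
  proof (intro allI impI)
    fix f g :: "'a \<Rightarrow> 'b" assume h: "\<forall>x\<in>A \<union> B. f x = g x"
    have "f \<in> E \<longleftrightarrow> g \<in> E" using dA[unfolded depends_on_def, rule_format, of f g] h by blast
    moreover have "f \<in> F \<longleftrightarrow> g \<in> F" using dB[unfolded depends_on_def, rule_format, of f g] h by blast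
    ultimately show "f \<in> E \<inter> F \<longleftrightarrow> g \<in> E \<inter> F" by blast
  qed
  define mrg where "mrg = (\<lambda>(f::'a\<Rightarrow>'b,g::'a\<Rightarrow>'b) x. if x \<in> A then f x else g x)"
  define PA where "PA = Pi_pmf A dflt p"
  define PB where "PB = Pi_pmf B dflt p"
  have "measure_pmf.prob (Pi_pmf D dflt p) (E \<inter> F) = measure_pmf.prob (Pi_pmf (A \<union> B) dflt p) (E \<inter> F)"
    using A B by (intro prob_restrict[OF D _ dAB]) blast
  also have "Pi_pmf (A \<union> B) dflt p = map_pmf mrg (pair_pmf PA PB)"
    unfolding mrg_def PA_def PB_def by (rule Pi_pmf_union[OF fA fB AB])
  also have "measure_pmf.prob (map_pmf mrg (pair_pmf PA PB)) (E \<inter> F)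
      = measure_pmf.prob (pair_pmf PA PB) (mrg -` (E \<inter> F))" by simp
  also have "mrg -` (E \<inter> F) = E \<times> F"
  proof -
    have 1: "mrg (f, g) \<in> E \<longleftrightarrow> f \<in> E" for f g
    proof -
      have "\<forall>x\<in>A. mrg (f, g) x = f x" unfolding mrg_def by simp
      thus ?thesis using dA[unfolded depends_on_def, rule_format, of "mrg (f, g)" f] by blast
    qed
    have 2: "mrg (f, g) \<in> F \<longleftrightarrow> g \<in> F" for f g
    proof -
      have "\<forall>x\<in>B. mrg (f, g) x = g x" using AB unfolding mrg_def by auto
      thus ?thesis using dB[unfolded depends_on_def, rule_format, of "mrg (f, g)" g] by blast
    qed
    show ?thesis
    proof (rule set_eqI)
      fix z :: "('a \<Rightarrow> 'b) \<times> ('a \<Rightarrow> 'b)"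
      obtain f g where z: "z = (f, g)" by (cases z)
      show "z \<in> mrg -` (E \<inter> F) \<longleftrightarrow> z \<in> E \<times> F" unfolding z using 1[of f g] 2[of f g] by simp
    qed
  qed
  also have "measure_pmf.prob (pair_pmf PA PB) (E \<times> F)
      = measure_pmf.prob (pair_pmf PA PB) ((E \<inter> set_pmf PA) \<times> (F \<inter> set_pmf PB))"
    by (subst measure_Int_set_pmf[symmetric]) (simp add: Times_Int_Times Int_ac)
  also have "\<dots> = measure_pmf.prob PA (E \<inter> set_pmf PA) * measure_pmf.prob PB (F \<inter> set_pmf PB)"
    by (rule measure_pmf_prob_product) (auto intro: countable_subset)
  also have "\<dots> = measure_pmf.prob PA E * measure_pmf.prob PB F"
    by (simp add: measure_Int_set_pmf)
  also have "measure_pmf.prob PA E = measure_pmf.prob (Pi_pmf D dflt p) E"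
    unfolding PA_def by (rule prob_restrict[OF D A dA, symmetric])
  also have "measure_pmf.prob PB F = measure_pmf.prob (Pi_pmf D dflt p) F"
    unfolding PB_def by (rule prob_restrict[OF D B dB, symmetric])
  finally show ?thesis .
qed

lemma depends_on_Inter:
  assumes "\<And>i. i \<in> I \<Longrightarrow> depends_on (E i) (G i)"
  shows "depends_on {f. \<forall>i\<in>I. f \<in> E i} (\<Union>i\<in>I. G i)"
  unfolding depends_on_def
proof (intro allI impI)
  fix f g :: "'b \<Rightarrow> 'c" assume h: "\<forall>x\<in>(\<Union>i\<in>I. G i). f x = g x"
  have "f \<in> E i \<longleftrightarrow> g \<in> E i" if i: "i \<in> I" for i
  proof -
    have "\<forall>x\<in>G i. f x = g x" using h i by blast
    thus ?thesis using assms[OF i, unfolded depends_on_def, rule_format, of f g] by blast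
  qed
  thus "f \<in> {f. \<forall>i\<in>I. f \<in> E i} \<longleftrightarrow> g \<in> {f. \<forall>i\<in>I. f \<in> E i}" by blast
qed

lemma prob_indep_family:
  assumes D: "finite D" and I: "finite I"
    and G: "\<And>i. i \<in> I \<Longrightarrow> G i \<subseteq> D"
    and disj: "\<And>i j. i \<in> I \<Longrightarrow> j \<in> I \<Longrightarrow> i \<noteq> j \<Longrightarrow> G i \<inter> G j = {}"
    and dep: "\<And>i. i \<in> I \<Longrightarrow> depends_on (E i) (G i)"
  shows "measure_pmf.prob (Pi_pmf D dflt p) {f. \<forall>i\<in>I. f \<in> E i} =
         (\<Prod>i\<in>I. measure_pmf.prob (Pi_pmf D dflt p) (E i))"
  using I G disj dep
proof (induction I rule: finite_induct)
  case empty
  then show ?case by simp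
next
  case (insert i I)
  have eq: "{f. \<forall>j\<in>insert i I. f \<in> E j} = E i \<inter> {f. \<forall>j\<in>I. f \<in> E j}" by auto
  have "measure_pmf.prob (Pi_pmf D dflt p) (E i \<inter> {f. \<forall>j\<in>I. f \<in> E j})
      = measure_pmf.prob (Pi_pmf D dflt p) (E i) * measure_pmf.prob (Pi_pmf D dflt p) {f. \<forall>j\<in>I. f \<in> E j}"
  proof (rule prob_indep2[OF D])
    show "G i \<subseteq> D" using insert.prems(1)[of i] by simp
    show "(\<Union>j\<in>I. G j) \<subseteq> D" using insert.prems(1) by blast
    have "G i \<inter> G j = {}" if "j \<in> I" for j
      using insert.prems(2)[of i j] that insert.hyps(2) by blast
    thus "G i \<inter> (\<Union>j\<in>I. G j) = {}" by blast
    show "depends_on (E i) (G i)" using insert.prems(3)[of i] by simp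
    show "depends_on {f. \<forall>j\<in>I. f \<in> E j} (\<Union>j\<in>I. G j)"
      using insert.prems(3) by (intro depends_on_Inter) blast
  qed
  also have "measure_pmf.prob (Pi_pmf D dflt p) {f. \<forall>j\<in>I. f \<in> E j} = (\<Prod>j\<in>I. measure_pmf.prob (Pi_pmf D dflt p) (E j))"
  proof (rule insert.IH)
    show "\<And>j. j \<in> I \<Longrightarrow> G j \<subseteq> D" using insert.prems(1) by blast
    show "\<And>j k. j \<in> I \<Longrightarrow> k \<in> I \<Longrightarrow> j \<noteq> k \<Longrightarrow> G j \<inter> G k = {}" using insert.prems(2) by blast
    show "\<And>j. j \<in> I \<Longrightarrow> depends_on (E j) (G j)" using insert.prems(3) by blast
  qed
  finally show ?case using eq insert.hyps by simp
qed

lemma prob_card_binomial: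
  assumes D: "finite D" and S: "S \<subseteq> D" and p: "0 \<le> p" "p \<le> 1"
  shows "measure_pmf.prob (Pi_pmf D dflt (\<lambda>_. bernoulli_pmf p)) {f. R (card {x\<in>S. f x})}
       = measure_pmf.prob (binomial_pmf (card S) p) {k. R k}"
proof -
  have fS: "finite S" using D S finite_subset by auto
  have dep: "depends_on {f. R (card {x\<in>S. f x})} S"
    unfolding depends_on_def
  proof (intro allI impI)
    fix f g :: "'a \<Rightarrow> bool" assume "\<forall>x\<in>S. f x = g x"
    hence "{x\<in>S. f x} = {x\<in>S. g x}" by auto
    thus "f \<in> {f. R (card {x\<in>S. f x})} \<longleftrightarrow> g \<in> {f. R (card {x\<in>S. f x})}" by simp
  qed
  have "measure_pmf.prob (Pi_pmf D dflt (\<lambda>_. bernoulli_pmf p)) {f. R (card {x\<in>S. f x})}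
      = measure_pmf.prob (Pi_pmf S dflt (\<lambda>_. bernoulli_pmf p)) {f. R (card {x\<in>S. f x})}"
    by (rule prob_restrict[OF D S dep])
  also have "binomial_pmf (card S) p = map_pmf (\<lambda>f. card {x\<in>S. f x}) (Pi_pmf S dflt (\<lambda>_. bernoulli_pmf p))"
    by (rule binomial_pmf_altdef') (use fS p in auto)
  hence "measure_pmf.prob (binomial_pmf (card S) p) {k. R k}
      = measure_pmf.prob (Pi_pmf S dflt (\<lambda>_. bernoulli_pmf p)) {f. R (card {x\<in>S. f x})}"
    by (simp add: vimage_def)
  finally show ?thesis by simp
qed

lemma prob_card_ge1:
  assumes D: "finite D" and S: "S \<subseteq> D" and p: "0 \<le> p" "p \<le> 1"
  shows "measure_pmf.prob (Pi_pmf D dflt (\<lambda>_. bernoulli_pmf p)) {f. card {x\<in>S. f x} \<ge> 1}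
       = 1 - (1 - p) ^ card S"
proof -
  have "measure_pmf.prob (binomial_pmf (card S) p) {k. k \<ge> 1}
      = measure_pmf.prob (binomial_pmf (card S) p) (UNIV - {0})"
    by (intro arg_cong[where f="measure_pmf.prob _"]) auto
  also have "\<dots> = 1 - measure_pmf.prob (binomial_pmf (card S) p) {0}"
    by (subst measure_pmf.prob_compl[symmetric]) auto
  also have "\<dots> = 1 - (1 - p) ^ card S" using p by (simp add: measure_pmf_single)
  finally show ?thesis using prob_card_binomial[OF D S p, where R="\<lambda>k. k \<ge> 1"] by simp
qed

lemma prob_card_ge2:
  assumes D: "finite D" and S: "S \<subseteq> D" and p: "0 \<le> p" "p \<le> 1"
  shows "measure_pmf.prob (Pi_pmf D dflt (\<lambda>_. bernoulli_pmf p)) {f. card {x\<in>S. f x} \<ge> 2}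
       = 1 - (1 - p) ^ card S - real (card S) * p * (1 - p) ^ (card S - 1)"
proof -
  have "measure_pmf.prob (binomial_pmf (card S) p) {k. k \<ge> 2}
      = measure_pmf.prob (binomial_pmf (card S) p) (UNIV - {0, 1})"
    by (intro arg_cong[where f="measure_pmf.prob _"]) auto
  also have "\<dots> = 1 - measure_pmf.prob (binomial_pmf (card S) p) {0, 1}"
    by (subst measure_pmf.prob_compl[symmetric]) auto
  also have "measure_pmf.prob (binomial_pmf (card S) p) {0, 1}
      = pmf (binomial_pmf (card S) p) 0 + pmf (binomial_pmf (card S) p) 1"
    by (subst measure_measure_pmf_finite) auto
  also have "\<dots> = (1 - p) ^ card S + real (card S) * p * (1 - p) ^ (card S - 1)"
    using p by simp
  finally show ?thesis using prob_card_binomial[OF D S p, where R="\<lambda>k. k \<ge> 2"] by simp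
qed

lemma prob_coord:
  assumes D: "finite D" and s: "s \<in> D" and p: "0 \<le> p" "p \<le> 1"
  shows "measure_pmf.prob (Pi_pmf D dflt (\<lambda>_. bernoulli_pmf p)) {f. f s} = p"
proof -
  have "measure_pmf.prob (Pi_pmf D dflt (\<lambda>_. bernoulli_pmf p)) {f. f s}
      = measure_pmf.prob (map_pmf (\<lambda>f. f s) (Pi_pmf D dflt (\<lambda>_. bernoulli_pmf p))) {True}"
    by (simp add: vimage_def)
  also have "\<dots> = p" using s D p by (simp add: Pi_pmf_component measure_pmf_single)
  finally show ?thesis .
qed

lemma prob_sum_subsets:
  assumes D: "finite D" and p: "0 \<le> p" "p \<le> 1"
  shows "(\<Sum>Y\<in>{Y. Y \<subseteq> D \<and> P Y}. p ^ card Y * (1 - p) ^ (card D - card Y))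
       = measure_pmf.prob (Pi_pmf D False (\<lambda>_. bernoulli_pmf p)) {\<omega>. P {s\<in>D. \<omega> s}}"
proof -
  define M where "M = Pi_pmf D False (\<lambda>_. bernoulli_pmf p)"
  define Ou where "Ou = {\<omega>::'a \<Rightarrow> bool. \<forall>x. x \<notin> D \<longrightarrow> \<omega> x = False}"
  define S where "S = Ou \<inter> {\<omega>. P {s\<in>D. \<omega> s}}"
  have fO: "finite Ou"
  proof -
    have "Ou = PiE_dflt D False (\<lambda>_. UNIV)" unfolding Ou_def PiE_dflt_def by auto
    thus ?thesis using D by auto
  qed
  have fS: "finite S" unfolding S_def using fO by auto
  have supp: "set_pmf M \<subseteq> Ou" unfolding M_def Ou_def using set_Pi_pmf_subset[OF D, of False "\<lambda>_. bernoulli_pmf p"] by simp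
  have "measure_pmf.prob M {\<omega>. P {s\<in>D. \<omega> s}} = measure_pmf.prob M ({\<omega>. P {s\<in>D. \<omega> s}} \<inter> set_pmf M)"
    by (simp add: measure_Int_set_pmf)
  also have "{\<omega>. P {s\<in>D. \<omega> s}} \<inter> set_pmf M = S \<inter> set_pmf M" unfolding S_def using supp by blast
  also have "measure_pmf.prob M (S \<inter> set_pmf M) = measure_pmf.prob M S" by (simp add: measure_Int_set_pmf)
  also have "\<dots> = (\<Sum>\<omega>\<in>S. pmf M \<omega>)" using fS by (simp add: measure_measure_pmf_finite)
  also have "\<dots> = (\<Sum>\<omega>\<in>S. p ^ card {s\<in>D. \<omega> s} * (1 - p) ^ (card D - card {s\<in>D. \<omega> s}))"
  proof (intro sum.cong refl)
    fix \<omega> assume w: "\<omega> \<in> S"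
    have "pmf M \<omega> = (\<Prod>x\<in>D. pmf (bernoulli_pmf p) (\<omega> x))"
      unfolding M_def using w D by (intro pmf_Pi') (auto simp: S_def Ou_def)
    also have "\<dots> = (\<Prod>x\<in>D. if \<omega> x then p else 1 - p)"
      using p by (intro prod.cong refl) auto
    also have "\<dots> = (\<Prod>x\<in>D \<inter> {x. \<omega> x}. p) * (\<Prod>x\<in>D \<inter> - {x. \<omega> x}. 1 - p)"
      by (rule prod.If_cases[OF D])
    also have "\<dots> = p ^ card {s\<in>D. \<omega> s} * (1 - p) ^ (card D - card {s\<in>D. \<omega> s})"
    proof -
      have "D \<inter> - {x. \<omega> x} = D - {s\<in>D. \<omega> s}" by auto
      hence "card (D \<inter> - {x. \<omega> x}) = card D - card {s\<in>D. \<omega> s}"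
        using D by (simp add: card_Diff_subset)
      moreover have "D \<inter> {x. \<omega> x} = {s\<in>D. \<omega> s}" by auto
      ultimately show ?thesis by simp
    qed
    finally show "pmf M \<omega> = p ^ card {s\<in>D. \<omega> s} * (1 - p) ^ (card D - card {s\<in>D. \<omega> s})" .
  qed
  also have "\<dots> = (\<Sum>Y\<in>{Y. Y \<subseteq> D \<and> P Y}. p ^ card Y * (1 - p) ^ (card D - card Y))"
  proof (rule sum.reindex_bij_betw[of "\<lambda>\<omega>. {s\<in>D. \<omega> s}" S "{Y. Y \<subseteq> D \<and> P Y}"
        "\<lambda>Y. p ^ card Y * (1 - p) ^ (card D - card Y)"])
    show "bij_betw (\<lambda>\<omega>. {s \<in> D. \<omega> s}) S {Y. Y \<subseteq> D \<and> P Y}"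
    proof (rule bij_betwI[where g="\<lambda>Y s. s \<in> Y"])
      show "(\<lambda>\<omega>. {s \<in> D. \<omega> s}) \<in> S \<rightarrow> {Y. Y \<subseteq> D \<and> P Y}" unfolding S_def by auto
      show "(\<lambda>Y s. s \<in> Y) \<in> {Y. Y \<subseteq> D \<and> P Y} \<rightarrow> S"
      proof
        fix Y assume Y: "Y \<in> {Y. Y \<subseteq> D \<and> P Y}"
        hence "{s\<in>D. s \<in> Y} = Y" by auto
        thus "(\<lambda>s. s \<in> Y) \<in> S" using Y unfolding S_def Ou_def by auto
      qed
      show "\<And>x. x \<in> S \<Longrightarrow> (\<lambda>s. s \<in> {s \<in> D. x s}) = x"
        unfolding S_def Ou_def by (auto simp: fun_eq_iff)
      show "\<And>y. y \<in> {Y. Y \<subseteq> D \<and> P Y} \<Longrightarrow> {s \<in> D. s \<in> y} = y" by auto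
    qed
  qed
  finally show ?thesis unfolding M_def by simp
qed

lemma prob_Yd_eq:
  assumes p: "0 \<le> p" "p \<le> 1"
  shows "prob_Yd n d p P = measure_pmf.prob (Pi_pmf (dsimplices n d) False (\<lambda>_. bernoulli_pmf p))
            {\<omega>. P {s\<in>dsimplices n d. \<omega> s}}"
  unfolding prob_Yd_def
  by (rule prob_sum_subsets[OF _ p]) (unfold dsimplices_def, rule finite_subset[of _ "Pow {..<n}"], auto)

lemma prob_as_sum:
  assumes fin: "finite (set_pmf M)"
  shows "measure_pmf.prob M A = (\<Sum>x\<in>set_pmf M. indicator A x * pmf M x)"
proof -
  have "measure_pmf.prob M A = measure_pmf.prob M (A \<inter> set_pmf M)" by (simp add: measure_Int_set_pmf)
  also have "\<dots> = (\<Sum>x\<in>A \<inter> set_pmf M. pmf M x)" using fin by (simp add: measure_measure_pmf_finite)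
  also have "\<dots> = (\<Sum>x\<in>set_pmf M. indicator A x * pmf M x)"
    using fin by (simp add: sum.If_cases indicator_def Int_commute Int_def)
  finally show ?thesis .
qed

lemma cheb_events:
  fixes M :: "'a pmf" and E :: "'i \<Rightarrow> 'a set" and a :: real
  assumes fin: "finite (set_pmf M)" and I: "finite I" and a: "a > 0"
    and indep: "\<And>i j. i \<in> I \<Longrightarrow> j \<in> I \<Longrightarrow> \<not> Dep i j \<Longrightarrow>
          measure_pmf.prob M (E i \<inter> E j) = measure_pmf.prob M (E i) * measure_pmf.prob M (E j)"
  shows "measure_pmf.prob M {\<omega>. a \<le> \<bar>(\<Sum>i\<in>I. indicator (E i) \<omega>) - (\<Sum>i\<in>I. measure_pmf.prob M (E i))\<bar>}
         \<le> (\<Sum>i\<in>I. \<Sum>j\<in>{j\<in>I. Dep i j}. measure_pmf.prob M (E i \<inter> E j)) / a^2"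
proof -
  define S where "S = set_pmf M"
  define \<pi> where "\<pi> = pmf M"
  define P where "P = (\<lambda>i. measure_pmf.prob M (E i))"
  define X where "X = (\<lambda>\<omega>. \<Sum>i\<in>I. indicator (E i) \<omega> :: real)"
  define \<mu> where "\<mu> = (\<Sum>i\<in>I. P i)"
  have fS: "finite S" unfolding S_def by (rule fin)
  have pi0: "\<pi> x \<ge> 0" for x unfolding \<pi>_def by simp
  have sum1: "(\<Sum>x\<in>S. \<pi> x) = 1" unfolding S_def \<pi>_def by (rule sum_pmf_eq_1[OF fin]) simp
  have pr: "measure_pmf.prob M A = (\<Sum>x\<in>S. indicator A x * \<pi> x)" for A
    unfolding S_def \<pi>_def by (rule prob_as_sum[OF fin])
  define V where "V = (\<Sum>x\<in>S. \<pi> x * (X x - \<mu>)^2)"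
  have step1: "measure_pmf.prob M {\<omega>. a \<le> \<bar>X \<omega> - \<mu>\<bar>} \<le> V / a^2"
  proof -
    have "measure_pmf.prob M {\<omega>. a \<le> \<bar>X \<omega> - \<mu>\<bar>} = (\<Sum>x\<in>S. indicator {\<omega>. a \<le> \<bar>X \<omega> - \<mu>\<bar>} x * \<pi> x)"
      by (rule pr)
    also have "\<dots> \<le> (\<Sum>x\<in>S. \<pi> x * (X x - \<mu>)^2 / a^2)"
    proof (intro sum_mono)
      fix x assume "x \<in> S"
      show "indicator {\<omega>. a \<le> \<bar>X \<omega> - \<mu>\<bar>} x * \<pi> x \<le> \<pi> x * (X x - \<mu>)^2 / a^2"
      proof (cases "a \<le> \<bar>X x - \<mu>\<bar>")
        case True
        have "a^2 \<le> \<bar>X x - \<mu>\<bar>^2" using True a by (intro power_mono) auto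
        hence "1 \<le> (X x - \<mu>)^2 / a^2" using a by simp
        hence "\<pi> x * 1 \<le> \<pi> x * ((X x - \<mu>)^2 / a^2)" using pi0 by (intro mult_left_mono) auto
        thus ?thesis using True by simp
      next
        case False
        thus ?thesis using pi0 by simp
      qed
    qed
    also have "\<dots> = V / a^2" unfolding V_def by (simp add: sum_divide_distrib)
    finally show ?thesis .
  qed
  have step2: "V = (\<Sum>i\<in>I. \<Sum>j\<in>I. measure_pmf.prob M (E i \<inter> E j) - P i * P j)"
  proof -
    have sq: "(X x - \<mu>)^2 = (\<Sum>i\<in>I. \<Sum>j\<in>I. (indicator (E i) x - P i) * (indicator (E j) x - P j))" for x
    proof -
      have "X x - \<mu> = (\<Sum>i\<in>I. indicator (E i) x - P i)"
        unfolding X_def \<mu>_def by (simp add: sum_subtractf)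
      thus ?thesis by (simp add: power2_eq_square sum_product)
    qed
    have inner: "(\<Sum>x\<in>S. \<pi> x * ((indicator (E i) x - P i) * (indicator (E j) x - P j)))
        = measure_pmf.prob M (E i \<inter> E j) - P i * P j" for i j
    proof -
      have "(\<Sum>x\<in>S. \<pi> x * ((indicator (E i) x - P i) * (indicator (E j) x - P j)))
          = (\<Sum>x\<in>S. indicator (E i \<inter> E j) x * \<pi> x) - P i * (\<Sum>x\<in>S. indicator (E j) x * \<pi> x)
            - P j * (\<Sum>x\<in>S. indicator (E i) x * \<pi> x) + P i * P j * (\<Sum>x\<in>S. \<pi> x)"
        by (simp add: algebra_simps sum.distrib sum_subtractf sum_distrib_left indicator_inter_arith)
      also have "\<dots> = measure_pmf.prob M (E i \<inter> E j) - P i * P j"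
        unfolding pr[symmetric] sum1 P_def by simp
      finally show ?thesis .
    qed
    have "V = (\<Sum>x\<in>S. \<Sum>i\<in>I. \<Sum>j\<in>I. \<pi> x * ((indicator (E i) x - P i) * (indicator (E j) x - P j)))"
      unfolding V_def sq by (simp add: sum_distrib_left)
    also have "\<dots> = (\<Sum>i\<in>I. \<Sum>x\<in>S. \<Sum>j\<in>I. \<pi> x * ((indicator (E i) x - P i) * (indicator (E j) x - P j)))"
      by (rule sum.swap)
    also have "\<dots> = (\<Sum>i\<in>I. \<Sum>j\<in>I. \<Sum>x\<in>S. \<pi> x * ((indicator (E i) x - P i) * (indicator (E j) x - P j)))"
      by (intro sum.cong refl sum.swap)
    also have "\<dots> = (\<Sum>i\<in>I. \<Sum>j\<in>I. measure_pmf.prob M (E i \<inter> E j) - P i * P j)"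
      by (simp add: inner)
    finally show ?thesis .
  qed
  have step3: "V \<le> (\<Sum>i\<in>I. \<Sum>j\<in>{j\<in>I. Dep i j}. measure_pmf.prob M (E i \<inter> E j))"
  proof -
    have "(\<Sum>j\<in>I. measure_pmf.prob M (E i \<inter> E j) - P i * P j)
        \<le> (\<Sum>j\<in>{j\<in>I. Dep i j}. measure_pmf.prob M (E i \<inter> E j))" if i: "i \<in> I" for i
    proof -
      have "(\<Sum>j\<in>I. measure_pmf.prob M (E i \<inter> E j) - P i * P j)
          \<le> (\<Sum>j\<in>I. if Dep i j then measure_pmf.prob M (E i \<inter> E j) else 0)"
      proof (intro sum_mono)
        fix j assume j: "j \<in> I"
        show "measure_pmf.prob M (E i \<inter> E j) - P i * P j \<le> (if Dep i j then measure_pmf.prob M (E i \<inter> E j) else 0)"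
          using indep[OF i j] unfolding P_def by (auto simp: mult_nonneg_nonneg)
      qed
      also have "\<dots> = (\<Sum>j\<in>{j\<in>I. Dep i j}. measure_pmf.prob M (E i \<inter> E j))"
        using I by (simp add: sum.If_cases Int_def)
      finally show ?thesis .
    qed
    thus ?thesis unfolding step2 by (intro sum_mono) auto
  qed
  have "measure_pmf.prob M {\<omega>. a \<le> \<bar>X \<omega> - \<mu>\<bar>} \<le> (\<Sum>i\<in>I. \<Sum>j\<in>{j\<in>I. Dep i j}. measure_pmf.prob M (E i \<inter> E j)) / a^2"
    using step1 step3 a by (smt (verit) divide_right_mono zero_le_power2)
  thus ?thesis unfolding X_def \<mu>_def P_def .
qed

definition strs :: "nat \<Rightarrow> nat \<Rightarrow> nat set \<Rightarrow> nat set set" where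
  "strs n d t = {s\<in>dsimplices n d. t \<subseteq> s}"

definition Rof :: "nat \<Rightarrow> nat set \<Rightarrow> nat set set" where
  "Rof d s = {t. t \<subseteq> s \<and> card t = d}"

lemma star_sub: "strs n d t \<subseteq> dsimplices n d" unfolding strs_def by auto

lemma card_star:
  assumes t: "t \<in> ridges n d"
  shows "card (strs n d t) = n - d"
proof -
  have tn: "t \<subseteq> {..<n}" "card t = d" using t unfolding ridges_def by auto
  have ft: "finite t" using tn finite_subset by blast
  have "bij_betw (\<lambda>x. insert x t) ({..<n} - t) (strs n d t)"
  proof (rule bij_betw_imageI)
    show "inj_on (\<lambda>x. insert x t) ({..<n} - t)"
    proof (rule inj_onI)
      fix x y assume "x \<in> {..<n} - t" "y \<in> {..<n} - t" "insert x t = insert y t"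
      thus "x = y" by (metis Diff_iff insertE insertI1)
    qed
    show "(\<lambda>x. insert x t) ` ({..<n} - t) = strs n d t"
    proof
      show "(\<lambda>x. insert x t) ` ({..<n} - t) \<subseteq> strs n d t"
        using tn ft unfolding strs_def dsimplices_def by auto
      show "strs n d t \<subseteq> (\<lambda>x. insert x t) ` ({..<n} - t)"
      proof
        fix s assume s: "s \<in> strs n d t"
        hence ss: "s \<subseteq> {..<n}" "card s = d + 1" "t \<subseteq> s" unfolding strs_def dsimplices_def by auto
        have fs: "finite s" using ss finite_subset by blast
        have "card (s - t) = 1" using ss tn fs by (simp add: card_Diff_subset ft)
        then obtain x where x: "s - t = {x}" by (rule card_1_singletonE)
        hence "s = insert x t" using ss by blast
        moreover have "x \<in> {..<n} - t" using x ss by blast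
        ultimately show "s \<in> (\<lambda>x. insert x t) ` ({..<n} - t)" by blast
      qed
    qed
  qed
  hence "card (strs n d t) = card ({..<n} - t)" by (simp add: bij_betw_same_card)
  also have "\<dots> = n - d" using tn ft by (simp add: card_Diff_subset)
  finally show ?thesis .
qed

lemma Rid_ridges: "s \<in> dsimplices n d \<Longrightarrow> t \<in> Rof d s \<Longrightarrow> t \<in> ridges n d"
  unfolding Rof_def ridges_def dsimplices_def by auto

lemma Rid_finite_card:
  assumes "s \<in> dsimplices n d"
  shows "finite (Rof d s)" "card (Rof d s) = d + 1"
proof -
  have fs: "finite s" "card s = d + 1" using assms unfolding dsimplices_def by (auto intro: finite_subset)
  show "finite (Rof d s)" unfolding Rof_def by (rule finite_subset[of _ "Pow s"]) (use fs in auto)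
  show "card (Rof d s) = d + 1" unfolding Rof_def using n_subsets[OF fs(1), of d] fs by simp
qed

lemma in_star: "s \<in> dsimplices n d \<Longrightarrow> t \<in> Rof d s \<Longrightarrow> s \<in> strs n d t"
  unfolding Rof_def strs_def by auto

lemma card_star_minus:
  assumes "s \<in> dsimplices n d" "t \<in> Rof d s"
  shows "card (strs n d t - {s}) = n - d - 1"
proof -
  have "finite (strs n d t)" by (rule finite_subset[OF star_sub finite_dsimplices])
  thus ?thesis using card_star[OF Rid_ridges[OF assms]] in_star[OF assms] by simp
qed

lemma star_disj:
  assumes s: "s \<in> dsimplices n d" and t: "t \<in> Rof d s" and t': "t' \<in> Rof d s" and tt: "t \<noteq> t'"
  shows "(strs n d t - {s}) \<inter> (strs n d t' - {s}) = {}"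
proof (rule ccontr)
  assume "(strs n d t - {s}) \<inter> (strs n d t' - {s}) \<noteq> {}"
  then obtain x where x: "x \<in> strs n d t" "x \<in> strs n d t'" "x \<noteq> s" by blast
  have ss: "s \<subseteq> {..<n}" "card s = d + 1" using s unfolding dsimplices_def by auto
  have fs: "finite s" by (rule finite_subset[OF ss(1)]) simp
  have tt0: "t \<subseteq> s" "card t = d" "t' \<subseteq> s" "card t' = d" using t t' unfolding Rof_def by auto
  have ft: "finite t" by (rule finite_subset[OF tt0(1) fs])
  have ft': "finite t'" by (rule finite_subset[OF tt0(3) fs])
  have "\<not> t' \<subseteq> t"
  proof
    assume "t' \<subseteq> t"
    hence "t' = t" using card_subset_eq[OF ft, of t'] tt0 by simp
    thus False using tt by simp
  qed
  hence "t \<subset> t \<union> t'" by blast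
  hence "card t < card (t \<union> t')" using ft ft' by (intro psubset_card_mono) auto
  hence c: "card (t \<union> t') \<ge> card s" using tt0 ss by simp
  have "t \<union> t' \<subseteq> s" using tt0 by simp
  hence ts: "t \<union> t' = s" using card_seteq[OF fs _ c] by simp
  have xx: "x \<subseteq> {..<n}" "card x = d + 1" "t \<union> t' \<subseteq> x" using x unfolding strs_def dsimplices_def by auto
  have fx: "finite x" by (rule finite_subset[OF xx(1)]) simp
  have "s = x" using card_subset_eq[OF fx, of s] xx ts ss by simp
  thus False using x by simp
qed

lemma depends_card: "depends_on {f. R (card {x\<in>S. f x})} S"
  unfolding depends_on_def
proof (intro allI impI)
  fix f g :: "'a \<Rightarrow> bool" assume "\<forall>x\<in>S. f x = g x"
  hence "{x\<in>S. f x} = {x\<in>S. g x}" by auto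
  thus "f \<in> {f. R (card {x\<in>S. f x})} \<longleftrightarrow> g \<in> {f. R (card {x\<in>S. f x})}" by simp
qed

lemma depends_mono:
  assumes "depends_on E A" "A \<subseteq> B" shows "depends_on E B"
  unfolding depends_on_def
proof (intro allI impI)
  fix f g :: "'a \<Rightarrow> 'b" assume "\<forall>x\<in>B. f x = g x"
  hence "\<forall>x\<in>A. f x = g x" using assms(2) by blast
  thus "f \<in> E \<longleftrightarrow> g \<in> E" using assms(1)[unfolded depends_on_def, rule_format, of f g] by blast
qed

lemma depends_Int:
  assumes "depends_on E A" "depends_on F B" shows "depends_on (E \<inter> F) (A \<union> B)"
  unfolding depends_on_def
proof (intro allI impI)
  fix f g :: "'a \<Rightarrow> 'b" assume h: "\<forall>x\<in>A \<union> B. f x = g x"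
  have "f \<in> E \<longleftrightarrow> g \<in> E" using assms(1)[unfolded depends_on_def, rule_format, of f g] h by blast
  moreover have "f \<in> F \<longleftrightarrow> g \<in> F" using assms(2)[unfolded depends_on_def, rule_format, of f g] h by blast
  ultimately show "f \<in> E \<inter> F \<longleftrightarrow> g \<in> E \<inter> F" by blast
qed

lemma depends_coord: "depends_on {f. f s} {s}"
  unfolding depends_on_def by auto

definition EH :: "nat \<Rightarrow> nat \<Rightarrow> nat set \<Rightarrow> (nat set \<Rightarrow> bool) set" where
  "EH n d t = {f. card {x\<in>strs n d t. f x} \<ge> 2}"

definition Et :: "nat \<Rightarrow> nat \<Rightarrow> nat set \<Rightarrow> nat set \<Rightarrow> (nat set \<Rightarrow> bool) set" where
  "Et n d s t = {f. card {x\<in>strs n d t - {s}. f x} \<ge> 1}"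

definition EF :: "nat \<Rightarrow> nat \<Rightarrow> nat set \<Rightarrow> (nat set \<Rightarrow> bool) set" where
  "EF n d s = {f. f s} \<inter> {f. \<forall>t\<in>Rof d s. f \<in> Et n d s t}"

definition GF :: "nat \<Rightarrow> nat \<Rightarrow> nat set \<Rightarrow> nat set set" where
  "GF n d s = insert s (\<Union>t\<in>Rof d s. strs n d t)"

lemma finite_strs: "finite (strs n d t)"
  by (rule finite_subset[OF star_sub finite_dsimplices])

lemma cdeg_eq: "cdeg {s\<in>dsimplices n d. f s} t = card {x\<in>strs n d t. f x}"
proof -
  have "{s' \<in> {s\<in>dsimplices n d. f s}. t \<subseteq> s'} = {x\<in>strs n d t. f x}" unfolding strs_def by auto
  thus ?thesis unfolding cdeg_def by simp
qed

lemma H_as_sum: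
  "real (card {t\<in>ridges n d. cdeg {s\<in>dsimplices n d. f s} t \<ge> 2})
     = (\<Sum>t\<in>ridges n d. indicator (EH n d t) f)"
proof -
  have "(\<Sum>t\<in>ridges n d. indicator (EH n d t) f) = (\<Sum>t\<in>ridges n d. if f \<in> EH n d t then 1 else (0::real))"
    by (simp add: indicator_def of_bool_def)
  also have "\<dots> = real (card {t\<in>ridges n d. f \<in> EH n d t})"
    by (rule sum_ind_card[OF finite_ridges])
  also have "{t\<in>ridges n d. f \<in> EH n d t} = {t\<in>ridges n d. cdeg {s\<in>dsimplices n d. f s} t \<ge> 2}"
    unfolding EH_def cdeg_eq by simp
  finally show ?thesis by simp
qed

lemma EF_iff:
  assumes s: "s \<in> dsimplices n d"
  shows "(f s \<and> kk d {s\<in>dsimplices n d. f s} s = 0) \<longleftrightarrow> f \<in> EF n d s"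
proof -
  define Y where "Y = {s\<in>dsimplices n d. f s}"
  have fin: "finite {t. t \<subseteq> s \<and> card t = d \<and> cdeg Y t = 1}"
    by (rule finite_subset[of _ "Rof d s"]) (use Rid_finite_card[OF s] in \<open>auto simp: Rof_def\<close>)
  have "kk d Y s = 0 \<longleftrightarrow> (\<forall>t\<in>Rof d s. cdeg Y t \<noteq> 1)"
    unfolding kk_def using fin by (auto simp: Rof_def)
  moreover have "cdeg Y t = Suc (card {x\<in>strs n d t - {s}. f x})" if t: "t \<in> Rof d s" and fs: "f s" for t
  proof -
    have "{x\<in>strs n d t. f x} = insert s {x\<in>strs n d t - {s}. f x}"
      using in_star[OF s t] fs by auto
    moreover have "finite {x\<in>strs n d t - {s}. f x}" using finite_strs by simp
    ultimately show ?thesis unfolding Y_def cdeg_eq by simp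
  qed
  ultimately show ?thesis unfolding Y_def[symmetric] EF_def Et_def by (auto simp: Suc_le_eq)
qed

lemma F_as_sum:
  "real (card {s\<in>{s\<in>dsimplices n d. f s}. kk d {s\<in>dsimplices n d. f s} s = 0})
     = (\<Sum>s\<in>dsimplices n d. indicator (EF n d s) f)"
proof -
  have "(\<Sum>s\<in>dsimplices n d. indicator (EF n d s) f) = (\<Sum>s\<in>dsimplices n d. if f \<in> EF n d s then 1 else (0::real))"
    by (simp add: indicator_def of_bool_def)
  also have "\<dots> = real (card {s\<in>dsimplices n d. f \<in> EF n d s})"
    by (rule sum_ind_card[OF finite_dsimplices])
  also have "{s\<in>dsimplices n d. f \<in> EF n d s} = {s\<in>{s\<in>dsimplices n d. f s}. kk d {s\<in>dsimplices n d. f s} s = 0}"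
    using EF_iff by blast
  finally show ?thesis by simp
qed

lemma dep_EH: "depends_on (EH n d t) (strs n d t)"
  unfolding EH_def by (rule depends_card)

lemma GF_sub: "s \<in> dsimplices n d \<Longrightarrow> GF n d s \<subseteq> dsimplices n d"
  unfolding GF_def using star_sub by blast

lemma dep_EF:
  assumes s: "s \<in> dsimplices n d"
  shows "depends_on (EF n d s) (GF n d s)"
proof -
  have "depends_on ({f. f s} \<inter> {f. \<forall>t\<in>Rof d s. f \<in> Et n d s t}) ({s} \<union> (\<Union>t\<in>Rof d s. strs n d t - {s}))"
  proof (rule depends_Int[OF depends_coord])
    show "depends_on {f. \<forall>t\<in>Rof d s. f \<in> Et n d s t} (\<Union>t\<in>Rof d s. strs n d t - {s})"
      unfolding Et_def by (rule depends_on_Inter) (rule depends_card)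
  qed
  thus ?thesis unfolding EF_def[symmetric]
    by (rule depends_mono) (auto simp: GF_def)
qed

context
  fixes n d :: nat and p :: real
  assumes p: "0 \<le> p" "p \<le> 1"
begin

abbreviation "MM \<equiv> Pi_pmf (dsimplices n d) False (\<lambda>_. bernoulli_pmf p)"

lemma prob_EH:
  assumes t: "t \<in> ridges n d"
  shows "measure_pmf.prob MM (EH n d t) = 1 - (1-p)^(n-d) - real (n-d) * p * (1-p)^(n-d-1)"
  using prob_card_ge2[OF finite_dsimplices star_sub p, where dflt=False] card_star[OF t]
  unfolding EH_def by simp

lemma prob_EF:
  assumes s: "s \<in> dsimplices n d"
  shows "measure_pmf.prob MM (EF n d s) = p * (1 - (1-p)^(n-d-1))^(d+1)"
proof -
  have "measure_pmf.prob MM (EF n d s) = measure_pmf.prob MM {f. f s} * measure_pmf.prob MM {f. \<forall>t\<in>Rof d s. f \<in> Et n d s t}"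
    unfolding EF_def
  proof (rule prob_indep2[OF finite_dsimplices])
    show "{s} \<subseteq> dsimplices n d" using s by simp
    show "(\<Union>t\<in>Rof d s. strs n d t - {s}) \<subseteq> dsimplices n d" using star_sub by blast
    show "{s} \<inter> (\<Union>t\<in>Rof d s. strs n d t - {s}) = {}" by blast
    show "depends_on {f. f s} {s}" by (rule depends_coord)
    show "depends_on {f. \<forall>t\<in>Rof d s. f \<in> Et n d s t} (\<Union>t\<in>Rof d s. strs n d t - {s})"
      unfolding Et_def by (rule depends_on_Inter) (rule depends_card)
  qed
  also have "measure_pmf.prob MM {f. f s} = p" by (rule prob_coord[OF finite_dsimplices s p])
  also have "measure_pmf.prob MM {f. \<forall>t\<in>Rof d s. f \<in> Et n d s t} = (\<Prod>t\<in>Rof d s. measure_pmf.prob MM (Et n d s t))"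
  proof (rule prob_indep_family[OF finite_dsimplices Rid_finite_card(1)[OF s]])
    show "\<And>t. t \<in> Rof d s \<Longrightarrow> strs n d t - {s} \<subseteq> dsimplices n d" using star_sub by blast
    show "\<And>i j. i \<in> Rof d s \<Longrightarrow> j \<in> Rof d s \<Longrightarrow> i \<noteq> j \<Longrightarrow> (strs n d i - {s}) \<inter> (strs n d j - {s}) = {}"
      by (rule star_disj[OF s])
    show "\<And>t. t \<in> Rof d s \<Longrightarrow> depends_on (Et n d s t) (strs n d t - {s})"
      unfolding Et_def by (rule depends_card)
  qed
  also have "\<dots> = (\<Prod>t\<in>Rof d s. 1 - (1-p)^(n-d-1))"
  proof (intro prod.cong refl)
    fix t assume t: "t \<in> Rof d s"
    have sub: "strs n d t - {s} \<subseteq> dsimplices n d" using star_sub by blast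
    show "measure_pmf.prob MM (Et n d s t) = 1 - (1-p)^(n-d-1)"
      unfolding Et_def using prob_card_ge1[OF finite_dsimplices sub p, where dflt=False] card_star_minus[OF s t] by simp
  qed
  also have "\<dots> = (1 - (1-p)^(n-d-1))^(d+1)" using Rid_finite_card[OF s] by simp
  finally show ?thesis .
qed

lemma indep_EH:
  assumes "strs n d t \<inter> strs n d t' = {}"
  shows "measure_pmf.prob MM (EH n d t \<inter> EH n d t') = measure_pmf.prob MM (EH n d t) * measure_pmf.prob MM (EH n d t')"
  by (rule prob_indep2[OF finite_dsimplices star_sub star_sub assms dep_EH dep_EH])

lemma indep_EF:
  assumes s: "s \<in> dsimplices n d" and s': "s' \<in> dsimplices n d" and "GF n d s \<inter> GF n d s' = {}"
  shows "measure_pmf.prob MM (EF n d s \<inter> EF n d s') = measure_pmf.prob MM (EF n d s) * measure_pmf.prob MM (EF n d s')"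
  by (rule prob_indep2[OF finite_dsimplices GF_sub[OF s] GF_sub[OF s'] assms(3) dep_EF[OF s] dep_EF[OF s']])

lemma prob_EF_pair:
  assumes s: "s \<in> dsimplices n d" and s': "s' \<in> dsimplices n d" and ne: "s \<noteq> s'"
  shows "measure_pmf.prob MM (EF n d s \<inter> EF n d s') \<le> p^2"
proof -
  have "measure_pmf.prob MM (EF n d s \<inter> EF n d s') \<le> measure_pmf.prob MM ({f. f s} \<inter> {f. f s'})"
    by (rule measure_pmf.finite_measure_mono) (auto simp: EF_def)
  also have "\<dots> = measure_pmf.prob MM {f. f s} * measure_pmf.prob MM {f. f s'}"
    by (rule prob_indep2[OF finite_dsimplices _ _ _ depends_coord depends_coord]) (use s s' ne in auto)
  also have "\<dots> = p^2" using prob_coord[OF finite_dsimplices s p] prob_coord[OF finite_dsimplices s' p]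
    by (simp add: power2_eq_square)
  finally show ?thesis .
qed

lemma prob_EF_le: "s \<in> dsimplices n d \<Longrightarrow> measure_pmf.prob MM (EF n d s \<inter> EF n d s) \<le> p"
  using measure_pmf.finite_measure_mono[of "EF n d s" "{f. f s}" MM] prob_coord[OF finite_dsimplices _ p, where dflt=False and s=s]
  by (auto simp: EF_def)

end

lemma dsimp_props:
  assumes "s \<in> dsimplices n d"
  shows "s \<subseteq> {..<n}" "card s = d + 1" "finite s"
proof -
  show "s \<subseteq> {..<n}" "card s = d + 1" using assms unfolding dsimplices_def by auto
  thus "finite s" using finite_subset by blast
qed

lemma cntH:
  assumes t: "t \<in> ridges n d"
  shows "card {t'\<in>ridges n d. strs n d t \<inter> strs n d t' \<noteq> {}} \<le> n * (d + 1)"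
proof -
  have tn: "t \<subseteq> {..<n}" "card t = d" using t unfolding ridges_def by auto
  have ft: "finite t" by (rule finite_subset[OF tn(1)]) simp
  define SG where "SG = (SIGMA x:{..<n}. insert x t)"
  have fSG: "finite SG" unfolding SG_def using ft by auto
  have sub: "{t'\<in>ridges n d. strs n d t \<inter> strs n d t' \<noteq> {}} \<subseteq> (\<lambda>(x,y). insert x t - {y}) ` SG"
  proof
    fix t' assume "t' \<in> {t'\<in>ridges n d. strs n d t \<inter> strs n d t' \<noteq> {}}"
    then obtain s where t': "t' \<in> ridges n d" and s: "s \<in> strs n d t" "s \<in> strs n d t'" by blast
    have sD: "s \<in> dsimplices n d" "t \<subseteq> s" "t' \<subseteq> s" using s unfolding strs_def by auto
    note sp = dsimp_props[OF sD(1)]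
    have ct': "card t' = d" using t' unfolding ridges_def by auto
    have ft': "finite t'" by (rule finite_subset[OF sD(3) sp(3)])
    have "card (s - t) = 1" using sp tn sD(2) ft by (simp add: card_Diff_subset)
    then obtain x where x: "s - t = {x}" by (rule card_1_singletonE)
    have sx: "s = insert x t" using x sD(2) by blast
    have xn: "x < n" using x sp(1) by blast
    have "card (s - t') = 1" using sp ct' sD(3) ft' by (simp add: card_Diff_subset)
    then obtain y where y: "s - t' = {y}" by (rule card_1_singletonE)
    have "t' = s - {y}" using y sD(3) by blast
    moreover have "y \<in> insert x t" using y sx by blast
    ultimately show "t' \<in> (\<lambda>(x,y). insert x t - {y}) ` SG"
      unfolding SG_def using sx xn by (intro image_eqI[of _ _ "(x, y)"]) auto
  qed
  have "card {t'\<in>ridges n d. strs n d t \<inter> strs n d t' \<noteq> {}} \<le> card ((\<lambda>(x,y). insert x t - {y}) ` SG)"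
    by (rule card_mono[OF finite_imageI[OF fSG] sub])
  also have "\<dots> \<le> card SG" by (rule card_image_le[OF fSG])
  also have "card SG = (\<Sum>x<n. card (insert x t))" unfolding SG_def using ft by simp
  also have "\<dots> \<le> (\<Sum>x<n. d + 1)"
    by (intro sum_mono) (use ft tn in \<open>simp add: card_insert_if\<close>)
  finally show ?thesis by simp
qed

lemma GF_elem:
  assumes s: "s \<in> dsimplices n d" and z: "z \<in> GF n d s"
  shows "z \<in> dsimplices n d" "card (z \<inter> s) \<ge> d"
proof -
  note sp = dsimp_props[OF s]
  show "z \<in> dsimplices n d" using GF_sub[OF s] z by blast
  show "card (z \<inter> s) \<ge> d"
  proof (cases "z = s")
    case True thus ?thesis using sp by simp
  next
    case False
    then obtain t where t: "t \<in> Rof d s" "z \<in> strs n d t" using z unfolding GF_def by blast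
    have "t \<subseteq> z \<inter> s" using t unfolding Rof_def strs_def by auto
    moreover have "finite (z \<inter> s)" using sp by simp
    ultimately have "card t \<le> card (z \<inter> s)" by (rule card_mono[rotated])
    thus ?thesis using t unfolding Rof_def by simp
  qed
qed

lemma GF_meet:
  assumes s: "s \<in> dsimplices n d" and s': "s' \<in> dsimplices n d" and z: "z \<in> GF n d s" "z \<in> GF n d s'"
  shows "card (s \<inter> s') \<ge> d - 1"
proof -
  have zD: "z \<in> dsimplices n d" using GF_elem[OF s z(1)] by simp
  note zp = dsimp_props[OF zD]
  define A where "A = z \<inter> s"
  define B where "B = z \<inter> s'"
  have cA: "card A \<ge> d" unfolding A_def by (rule GF_elem(2)[OF s z(1)])
  have cB: "card B \<ge> d" unfolding B_def by (rule GF_elem(2)[OF s' z(2)])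
  have fA: "finite A" "finite B" unfolding A_def B_def using zp by auto
  have "card A + card B = card (A \<union> B) + card (A \<inter> B)" by (rule card_Un_Int[OF fA])
  moreover have "card (A \<union> B) \<le> d + 1"
  proof -
    have "A \<union> B \<subseteq> z" unfolding A_def B_def by blast
    hence "card (A \<union> B) \<le> card z" by (rule card_mono[OF zp(3)])
    thus ?thesis using zp by simp
  qed
  moreover have "card (A \<inter> B) \<le> card (s \<inter> s')"
    by (rule card_mono) (use dsimp_props[OF s] in \<open>auto simp: A_def B_def\<close>)
  ultimately show ?thesis using cA cB by linarith
qed

lemma cntF:
  assumes s: "s \<in> dsimplices n d" and d: "d \<ge> 1"
  shows "card {s'\<in>dsimplices n d. s' \<noteq> s \<and> GF n d s \<inter> GF n d s' \<noteq> {}} \<le> 2^(d+1) * n^2"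
proof -
  note sp = dsimp_props[OF s]
  define U where "U = {u. u \<subseteq> s \<and> card u = d - 1}"
  define Dm where "Dm = U \<times> {..<n} \<times> {..<n}"
  have fU: "finite U" unfolding U_def using sp by auto
  have cU: "card U = (d+1) choose (d-1)" unfolding U_def using n_subsets[OF sp(3), of "d-1"] sp by simp
  have fDm: "finite Dm" unfolding Dm_def using fU by auto
  have sub: "{s'\<in>dsimplices n d. s' \<noteq> s \<and> GF n d s \<inter> GF n d s' \<noteq> {}}
      \<subseteq> (\<lambda>(u,a,b). insert a (insert b u)) ` Dm"
  proof
    fix s' assume "s' \<in> {s'\<in>dsimplices n d. s' \<noteq> s \<and> GF n d s \<inter> GF n d s' \<noteq> {}}"
    then obtain z where s': "s' \<in> dsimplices n d" and z: "z \<in> GF n d s" "z \<in> GF n d s'" by blast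
    note sp' = dsimp_props[OF s']
    have "card (s \<inter> s') \<ge> d - 1" by (rule GF_meet[OF s s' z])
    then obtain u where u: "u \<subseteq> s \<inter> s'" "card u = d - 1" "finite u" by (rule obtain_subset_with_card_n)
    have "card (s' - u) = 2" using sp' u d by (simp add: card_Diff_subset)
    then obtain a b where ab: "s' - u = {a, b}" by (auto simp: card_2_iff)
    have "s' = insert a (insert b u)" using ab u by blast
    moreover have "a < n" "b < n" using ab sp' by blast+
    moreover have "u \<in> U" unfolding U_def using u by auto
    ultimately show "s' \<in> (\<lambda>(u,a,b). insert a (insert b u)) ` Dm"
      unfolding Dm_def by (intro image_eqI[of _ _ "(u, a, b)"]) auto
  qed
  have "card {s'\<in>dsimplices n d. s' \<noteq> s \<and> GF n d s \<inter> GF n d s' \<noteq> {}} \<le> card ((\<lambda>(u,a,b). insert a (insert b u)) ` Dm)"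
    by (rule card_mono[OF finite_imageI[OF fDm] sub])
  also have "\<dots> \<le> card Dm" by (rule card_image_le[OF fDm])
  also have "card Dm = ((d+1) choose (d-1)) * (n * n)" unfolding Dm_def using cU by (simp add: card_cartesian_product)
  also have "\<dots> \<le> 2^(d+1) * (n * n)" by (intro mult_right_mono binomial_le_pow2) simp
  finally show ?thesis by (simp add: power2_eq_square)
qed

context
  fixes n d :: nat and p :: real
  assumes p: "0 \<le> p" "p \<le> 1"
begin

lemma VH:
  "(\<Sum>t\<in>ridges n d. \<Sum>t'\<in>{t'\<in>ridges n d. strs n d t \<inter> strs n d t' \<noteq> {}}.
      measure_pmf.prob (Pi_pmf (dsimplices n d) False (\<lambda>_. bernoulli_pmf p)) (EH n d t \<inter> EH n d t'))
    \<le> real (card (ridges n d)) * (real n * (real d + 1))"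
proof (rule sum_bounded_above)
  fix t assume t: "t \<in> ridges n d"
  have "(\<Sum>t'\<in>{t'\<in>ridges n d. strs n d t \<inter> strs n d t' \<noteq> {}}.
      measure_pmf.prob (Pi_pmf (dsimplices n d) False (\<lambda>_. bernoulli_pmf p)) (EH n d t \<inter> EH n d t'))
      \<le> real (card {t'\<in>ridges n d. strs n d t \<inter> strs n d t' \<noteq> {}}) * 1"
    by (rule sum_bounded_above) (rule measure_pmf.prob_le_1)
  also have "\<dots> \<le> real (n * (d + 1))" using cntH[OF t] by (simp only: mult_1_right of_nat_le_iff)
  finally show "(\<Sum>t'\<in>{t'\<in>ridges n d. strs n d t \<inter> strs n d t' \<noteq> {}}.
      measure_pmf.prob (Pi_pmf (dsimplices n d) False (\<lambda>_. bernoulli_pmf p)) (EH n d t \<inter> EH n d t'))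
      \<le> real n * (real d + 1)" by (simp add: algebra_simps)
qed

lemma VF:
  assumes d: "d \<ge> 1"
  shows "(\<Sum>s\<in>dsimplices n d. \<Sum>s'\<in>{s'\<in>dsimplices n d. GF n d s \<inter> GF n d s' \<noteq> {}}.
      measure_pmf.prob (Pi_pmf (dsimplices n d) False (\<lambda>_. bernoulli_pmf p)) (EF n d s \<inter> EF n d s'))
    \<le> real (card (dsimplices n d)) * (p + 2^(d+1) * real n^2 * p^2)"
proof (rule sum_bounded_above)
  fix s assume s: "s \<in> dsimplices n d"
  define Pr where "Pr = (\<lambda>s'. measure_pmf.prob (Pi_pmf (dsimplices n d) False (\<lambda>_. bernoulli_pmf p)) (EF n d s \<inter> EF n d s'))"
  define Os where "Os = {s'\<in>dsimplices n d. s' \<noteq> s \<and> GF n d s \<inter> GF n d s' \<noteq> {}}"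
  have fOs: "finite Os" unfolding Os_def using finite_dsimplices by auto
  have "(\<Sum>s'\<in>{s'\<in>dsimplices n d. GF n d s \<inter> GF n d s' \<noteq> {}}. Pr s') \<le> (\<Sum>s'\<in>insert s Os. Pr s')"
    by (rule sum_mono2) (use fOs in \<open>auto simp: Os_def Pr_def\<close>)
  also have "\<dots> = Pr s + (\<Sum>s'\<in>Os. Pr s')" using fOs by (simp add: Os_def)
  also have "Pr s \<le> p" unfolding Pr_def by (rule prob_EF_le[OF p s])
  also have "(\<Sum>s'\<in>Os. Pr s') \<le> real (card Os) * p^2"
    by (rule sum_bounded_above) (unfold Pr_def Os_def, rule prob_EF_pair[OF p s], auto)
  also have "real (card Os) * p^2 \<le> real (2^(d+1) * n^2) * p^2"
  proof (rule mult_right_mono)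
    show "real (card Os) \<le> real (2^(d+1) * n^2)" unfolding Os_def using cntF[OF s d] by (simp only: of_nat_le_iff)
  qed simp
  finally show "(\<Sum>s'\<in>{s'\<in>dsimplices n d. GF n d s \<inter> GF n d s' \<noteq> {}}. Pr s') \<le> p + 2^(d+1) * real n^2 * p^2"
    by simp
qed

end

lemma fin_support:
  assumes D: "finite D"
  shows "finite (set_pmf (Pi_pmf D False (\<lambda>_. bernoulli_pmf p)))"
proof -
  have "set_pmf (Pi_pmf D False (\<lambda>_. bernoulli_pmf p)) \<subseteq> {f. \<forall>x. x \<notin> D \<longrightarrow> f x = False}"
    using set_Pi_pmf_subset[OF D, of False "\<lambda>_. bernoulli_pmf p"] by simp
  moreover have "{f::'a \<Rightarrow> bool. \<forall>x. x \<notin> D \<longrightarrow> f x = False} = PiE_dflt D False (\<lambda>_. UNIV)"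
    unfolding PiE_dflt_def by auto
  moreover have "finite (PiE_dflt D False (\<lambda>_. UNIV::bool set))" using D by auto
  ultimately show ?thesis using finite_subset by metis
qed

lemma main_bound:
  fixes n d :: nat and p a :: real
  assumes p: "0 \<le> p" "p \<le> 1" and d: "d \<ge> 1" and a: "a > 0"
    and gap: "real (card (dsimplices n d)) * (p * (1 - (1-p)^(n-d-1))^(d+1))
            - real (card (ridges n d)) * (1 - (1-p)^(n-d) - real (n-d) * p * (1-p)^(n-d-1)) \<ge> 2 * a"
  shows "prob_Yd n d p (\<lambda>Y. v_fun n d Y \<le> 0)
     \<le> (real (card (dsimplices n d)) * (p + 2^(d+1) * real n^2 * p^2)
         + real (card (ridges n d)) * (real n * (real d + 1))) / a^2"
proof -
  define D where "D = dsimplices n d"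
  define R where "R = ridges n d"
  define M where "M = Pi_pmf D False (\<lambda>_. bernoulli_pmf p)"
  have fD: "finite D" unfolding D_def by (rule finite_dsimplices)
  have fR: "finite R" unfolding R_def by (rule finite_ridges)
  have fM: "finite (set_pmf M)" unfolding M_def by (rule fin_support[OF fD])
  define XF where "XF = (\<lambda>\<omega>. \<Sum>s\<in>D. indicator (EF n d s) \<omega> :: real)"
  define XH where "XH = (\<lambda>\<omega>. \<Sum>t\<in>R. indicator (EH n d t) \<omega> :: real)"
  define \<mu>F where "\<mu>F = (\<Sum>s\<in>D. measure_pmf.prob M (EF n d s))"
  define \<mu>H where "\<mu>H = (\<Sum>t\<in>R. measure_pmf.prob M (EH n d t))"
  have muF: "\<mu>F = real (card D) * (p * (1 - (1-p)^(n-d-1))^(d+1))"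
  proof -
    have "\<mu>F = (\<Sum>s\<in>D. p * (1 - (1-p)^(n-d-1))^(d+1))"
      unfolding \<mu>F_def M_def D_def by (intro sum.cong refl prob_EF[OF p])
    thus ?thesis by simp
  qed
  have muH: "\<mu>H = real (card R) * (1 - (1-p)^(n-d) - real (n-d) * p * (1-p)^(n-d-1))"
  proof -
    have "\<mu>H = (\<Sum>t\<in>R. 1 - (1-p)^(n-d) - real (n-d) * p * (1-p)^(n-d-1))"
      unfolding \<mu>H_def M_def R_def D_def by (intro sum.cong refl prob_EH[OF p])
    thus ?thesis by simp
  qed
  have gap': "\<mu>F - \<mu>H \<ge> 2 * a" using gap unfolding muF muH D_def R_def .
  have sub: "{\<omega>. v_fun n d {s\<in>D. \<omega> s} \<le> 0} \<subseteq> {\<omega>. a \<le> \<bar>XF \<omega> - \<mu>F\<bar>} \<union> {\<omega>. a \<le> \<bar>XH \<omega> - \<mu>H\<bar>}"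
  proof
    fix \<omega> assume "\<omega> \<in> {\<omega>. v_fun n d {s\<in>D. \<omega> s} \<le> 0}"
    hence v: "v_fun n d {s\<in>D. \<omega> s} \<le> 0" by simp
    have "v_fun n d {s\<in>D. \<omega> s} = int (card {s\<in>{s\<in>D. \<omega> s}. kk d {s\<in>D. \<omega> s} s = 0})
        - int (card {t \<in> ridges n d. cdeg {s\<in>D. \<omega> s} t \<ge> 2})"
      by (rule v_identity) (auto simp: D_def)
    hence "real_of_int (v_fun n d {s\<in>D. \<omega> s}) = XF \<omega> - XH \<omega>"
      unfolding XF_def XH_def D_def R_def using F_as_sum[of n d \<omega>] H_as_sum[of n d \<omega>] by simp
    hence "XF \<omega> \<le> XH \<omega>" using v by linarith
    thus "\<omega> \<in> {\<omega>. a \<le> \<bar>XF \<omega> - \<mu>F\<bar>} \<union> {\<omega>. a \<le> \<bar>XH \<omega> - \<mu>H\<bar>}" using gap' by auto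
  qed
  have "prob_Yd n d p (\<lambda>Y. v_fun n d Y \<le> 0) = measure_pmf.prob M {\<omega>. v_fun n d {s\<in>D. \<omega> s} \<le> 0}"
    unfolding M_def D_def by (rule prob_Yd_eq[OF p])
  also have "\<dots> \<le> measure_pmf.prob M ({\<omega>. a \<le> \<bar>XF \<omega> - \<mu>F\<bar>} \<union> {\<omega>. a \<le> \<bar>XH \<omega> - \<mu>H\<bar>})"
    by (rule measure_pmf.finite_measure_mono[OF sub]) simp
  also have "\<dots> \<le> measure_pmf.prob M {\<omega>. a \<le> \<bar>XF \<omega> - \<mu>F\<bar>} + measure_pmf.prob M {\<omega>. a \<le> \<bar>XH \<omega> - \<mu>H\<bar>}"
    by (rule measure_subadditive) (simp_all add: measure_pmf.emeasure_eq_measure)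
  also have "measure_pmf.prob M {\<omega>. a \<le> \<bar>XF \<omega> - \<mu>F\<bar>}
      \<le> (\<Sum>s\<in>D. \<Sum>s'\<in>{s'\<in>D. GF n d s \<inter> GF n d s' \<noteq> {}}. measure_pmf.prob M (EF n d s \<inter> EF n d s')) / a^2"
    unfolding XF_def \<mu>F_def
    by (rule cheb_events[OF fM fD a]) (unfold M_def D_def, rule indep_EF[OF p], auto)
  also have "\<dots> \<le> (real (card D) * (p + 2^(d+1) * real n^2 * p^2)) / a^2"
    using VF[OF p d] a unfolding M_def D_def by (intro divide_right_mono) auto
  also have "measure_pmf.prob M {\<omega>. a \<le> \<bar>XH \<omega> - \<mu>H\<bar>}
      \<le> (\<Sum>t\<in>R. \<Sum>t'\<in>{t'\<in>R. strs n d t \<inter> strs n d t' \<noteq> {}}. measure_pmf.prob M (EH n d t \<inter> EH n d t')) / a^2"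
    unfolding XH_def \<mu>H_def
    by (rule cheb_events[OF fM fR a]) (unfold M_def D_def, rule indep_EH[OF p], auto)
  also have "\<dots> \<le> (real (card R) * (real n * (real d + 1))) / a^2"
    using VH[OF p] a unfolding M_def D_def R_def by (intro divide_right_mono) auto
  finally show ?thesis unfolding D_def R_def by (simp add: add_divide_distrib)
qed

lemma lim_pow_exp: "(\<lambda>n. (1 - c / real n) ^ (n - k)) \<longlonglongrightarrow> exp (-c)"
proof -
  have A: "(\<lambda>n. (1 + (-c) / real n) ^ n) \<longlonglongrightarrow> exp (-c)" by (rule tendsto_exp_limit_sequentially)
  have c0: "(\<lambda>n. 1 - c / real n) \<longlonglongrightarrow> 1" by real_asymp
  have B: "(\<lambda>n. (1 - c / real n) ^ k) \<longlonglongrightarrow> 1" using tendsto_power[OF c0, of k] by simp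
  have "(\<lambda>n. (1 + (-c) / real n) ^ n / (1 - c / real n) ^ k) \<longlonglongrightarrow> exp (-c) / 1"
    by (rule tendsto_divide[OF A B]) simp
  moreover have "eventually (\<lambda>n. (1 + (-c) / real n) ^ n / (1 - c / real n) ^ k = (1 - c / real n) ^ (n - k)) sequentially"
  proof -
    have "eventually (\<lambda>n. real n > \<bar>c\<bar> \<and> n \<ge> k) sequentially"
      by (intro eventually_conj) real_asymp+
    thus ?thesis
    proof (rule eventually_mono)
      fix n assume n: "real n > \<bar>c\<bar> \<and> n \<ge> k"
      hence "1 - c / real n \<noteq> 0" by (auto simp: field_simps split: if_splits)
      thus "(1 + (-c) / real n) ^ n / (1 - c / real n) ^ k = (1 - c / real n) ^ (n - k)"
        using n by (simp add: power_diff)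
    qed
  qed
  ultimately show ?thesis by (auto intro: Lim_transform_eventually)
qed

lemma lim_ratio: "(\<lambda>n. real (n - d) * (c / real n)) \<longlonglongrightarrow> c"
proof -
  have "(\<lambda>n. (real n - real d) * (c / real n)) \<longlonglongrightarrow> c" by real_asymp
  moreover have "eventually (\<lambda>n. (real n - real d) * (c / real n) = real (n - d) * (c / real n)) sequentially"
    using eventually_ge_at_top[of d] by eventually_elim (simp add: of_nat_diff)
  ultimately show ?thesis by (rule Lim_transform_eventually)
qed

lemma binom_ratio:
  assumes "d \<le> n"
  shows "real (n choose (d+1)) * (real d + 1) = real (n choose d) * real (n - d)"
proof (cases n)
  case 0 thus ?thesis using assms by simp
next
  case (Suc m)
  have "(n - d) * (n choose d) = n * (m choose d)" using binomial_absorb_comp[of n d] Suc by simp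
  also have "n * (m choose d) = (n choose Suc d) * Suc d" using Suc_times_binomial_eq[of m d] Suc by simp
  finally have "(n choose (d+1)) * (d + 1) = (n choose d) * (n - d)" by (simp add: mult.commute)
  hence "real ((n choose (d+1)) * (d + 1)) = real ((n choose d) * (n - d))" by simp
  thus ?thesis by (simp only: of_nat_mult of_nat_add of_nat_1)
qed

lemma RR_bound:
  assumes d: "2 \<le> d" and n: "d \<le> n"
  shows "real n ^ 2 / real d ^ 2 \<le> real (n choose d)"
proof -
  have "(real n / real d) ^ 2 \<le> (real n / real d) ^ d"
    by (rule power_increasing) (use d n in auto)
  also have "\<dots> \<le> real (n choose d)" by (rule binomial_ge_n_over_k_pow_k[OF n])
  finally show ?thesis by (simp add: power_divide)
qed

lemma card_dsimplices: "card (dsimplices n d) = n choose (d + 1)"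
  unfolding dsimplices_def using n_subsets[of "{..<n}" "d+1"] by simp

lemma final_bound:
  fixes n d :: nat and c \<delta> :: real
  assumes d: "d \<ge> 2" and c0: "c > 0" and \<delta>: "\<delta> > 0"
    and n: "n \<ge> d + 1" "real n \<ge> c"
    and gapn: "real (n-d)/(real d+1) * (c/real n) * (1 - (1-c/real n)^(n-d-1))^(d+1)
       - (1 - (1-c/real n)^(n-d) - real (n-d) * (c/real n) * (1-c/real n)^(n-d-1)) > 2 * \<delta>"
  shows "prob_Yd n d (c / real n) (\<lambda>Y. v_fun n d Y \<le> 0)
     \<le> (c + 2^(d+1)*c^2 + real d + 1) * real d^2 / (\<delta>^2 * real n)"
proof -
  define p where "p = c / real n"
  define RR where "RR = real (n choose d)"
  define DD where "DD = real (n choose (d+1))"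
  define K where "K = c + 2^(d+1)*c^2 + real d + 1"
  have n0: "real n > 0" using n by simp
  have p01: "0 \<le> p" "p \<le> 1" unfolding p_def using c0 n n0 by auto
  have RR0: "RR > 0" unfolding RR_def using n by simp
  have DDeq: "DD = RR * real (n - d) / (real d + 1)"
    using binom_ratio[of d n] n unfolding DD_def RR_def by (simp add: field_simps)
  have cardD: "real (card (dsimplices n d)) = DD" unfolding DD_def card_dsimplices by simp
  have cardR: "real (card (ridges n d)) = RR" unfolding RR_def card_ridges by simp
  have gap: "real (card (dsimplices n d)) * (p * (1 - (1-p)^(n-d-1))^(d+1))
            - real (card (ridges n d)) * (1 - (1-p)^(n-d) - real (n-d) * p * (1-p)^(n-d-1)) \<ge> 2 * (\<delta> * RR)"
  proof -
    have "real (card (dsimplices n d)) * (p * (1 - (1-p)^(n-d-1))^(d+1))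
            - real (card (ridges n d)) * (1 - (1-p)^(n-d) - real (n-d) * p * (1-p)^(n-d-1))
        = RR * (real (n-d)/(real d+1) * (c/real n) * (1 - (1-c/real n)^(n-d-1))^(d+1)
       - (1 - (1-c/real n)^(n-d) - real (n-d) * (c/real n) * (1-c/real n)^(n-d-1)))"
      unfolding cardD cardR DDeq p_def by (simp add: field_simps)
    also have "\<dots> \<ge> RR * (2 * \<delta>)" using gapn RR0 by (intro mult_left_mono) auto
    finally show ?thesis by (simp add: ac_simps)
  qed
  have a0: "\<delta> * RR > 0" using \<delta> RR0 by simp
  have mb: "prob_Yd n d p (\<lambda>Y. v_fun n d Y \<le> 0)
     \<le> (DD * (p + 2^(d+1) * real n^2 * p^2) + RR * (real n * (real d + 1))) / (\<delta> * RR)^2"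
    using main_bound[OF p01 _ a0 gap] d unfolding cardD cardR by simp
  have DDle: "DD \<le> RR * real n"
  proof -
    have "real (n - d) / (real d + 1) \<le> real n"
    proof -
      have "real (n - d) \<le> real n" by simp
      also have "\<dots> \<le> real n * (real d + 1)" using n0 by (simp add: field_simps)
      finally show ?thesis by (simp add: field_simps)
    qed
    hence "RR * (real (n - d) / (real d + 1)) \<le> RR * real n" using RR0 by (intro mult_left_mono) auto
    thus ?thesis unfolding DDeq by simp
  qed
  have pe: "p + 2^(d+1) * real n^2 * p^2 = c / real n + 2^(d+1) * c^2"
    unfolding p_def using n0 by (simp add: field_simps power2_eq_square)
  have t1: "DD * (p + 2^(d+1) * real n^2 * p^2) \<le> RR * real n * (c / real n + 2^(d+1) * c^2)"
    unfolding pe by (rule mult_right_mono[OF DDle]) (use c0 n0 in auto)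
  have t2: "RR * real n * (c / real n + 2^(d+1) * c^2) \<le> RR * real n * (c + 2^(d+1) * c^2)"
  proof -
    have "c / real n \<le> c" using c0 n by (simp add: field_simps)
    thus ?thesis using RR0 n0 by (intro mult_left_mono) auto
  qed
  have num: "DD * (p + 2^(d+1) * real n^2 * p^2) + RR * (real n * (real d + 1)) \<le> RR * real n * K"
    using t1 t2 unfolding K_def by (simp add: algebra_simps)
  have "prob_Yd n d p (\<lambda>Y. v_fun n d Y \<le> 0) \<le> RR * real n * K / (\<delta> * RR)^2"
    using mb num a0 by (smt (verit) divide_right_mono zero_le_power2)
  also have "\<dots> = real n * K / (\<delta>^2 * RR)" using RR0 by (simp add: field_simps power2_eq_square)
  also have "\<dots> \<le> real n * K / (\<delta>^2 * (real n^2 / real d^2))"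
  proof (rule divide_left_mono)
    show "\<delta>^2 * (real n^2 / real d^2) \<le> \<delta>^2 * RR" unfolding RR_def
      using RR_bound[of d n] d n by (intro mult_left_mono) auto
    show "0 \<le> real n * K" unfolding K_def using c0 by simp
    show "0 < \<delta>^2 * RR * (\<delta>^2 * (real n^2 / real d^2))" using \<delta> RR0 n0 d by simp
  qed
  also have "\<dots> = K * real d^2 / (\<delta>^2 * real n)" using n0 d \<delta> by (simp add: field_simps power2_eq_square)
  finally show ?thesis unfolding p_def K_def .
qed

theorem theorem5:
  fixes d :: nat and c :: real
  assumes "d \<ge> 2" and "c > c_crit d"
  shows "(\<lambda>n. prob_Yd n d (c / real n) (\<lambda>Y. v_fun n d Y \<le> 0)) \<longlonglongrightarrow> 0"
proof -
  have d: "d \<ge> 2" by (rule assms(1))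
  have c0: "c > 0" and gc: "g_fun d c > real d + 1" using g_above[OF assms] by auto
  define q where "q = exp (-c)"
  define \<alpha> where "\<alpha> = c / (real d + 1) * (1 - q)^(d+1)"
  define \<beta> where "\<beta> = 1 - q - c * q"
  define \<delta> where "\<delta> = (\<alpha> - \<beta>) / 3"
  have ab: "\<alpha> - \<beta> = (g_fun d c - (real d + 1)) / (real d + 1)"
    unfolding \<alpha>_def \<beta>_def q_def g_fun_def by (simp add: field_simps)
  have \<delta>0: "\<delta> > 0" unfolding \<delta>_def using ab gc by simp
  define \<alpha>n where "\<alpha>n = (\<lambda>n. real (n-d)/(real d+1) * (c/real n) * (1 - (1-c/real n)^(n-d-1))^(d+1))"
  define \<beta>n where "\<beta>n = (\<lambda>n. 1 - (1-c/real n)^(n-d) - real (n-d) * (c/real n) * (1-c/real n)^(n-d-1))"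
  have P1: "(\<lambda>n. (1-c/real n)^(n-d-1)) \<longlonglongrightarrow> q"
    unfolding q_def diff_diff_left by (rule lim_pow_exp)
  have P0: "(\<lambda>n. (1-c/real n)^(n-d)) \<longlonglongrightarrow> q"
    unfolding q_def by (rule lim_pow_exp)
  have la: "\<alpha>n \<longlonglongrightarrow> \<alpha>"
  proof -
    have "(\<lambda>n. real (n-d) * (c/real n) / (real d+1) * (1 - (1-c/real n)^(n-d-1))^(d+1))
        \<longlonglongrightarrow> c / (real d + 1) * (1 - q)^(d+1)"
      by (intro tendsto_intros lim_ratio P1) simp
    thus ?thesis unfolding \<alpha>n_def \<alpha>_def by (simp add: field_simps)
  qed
  have lb: "\<beta>n \<longlonglongrightarrow> \<beta>"
    unfolding \<beta>n_def \<beta>_def by (intro tendsto_intros lim_ratio P1 P0)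
  have "(\<lambda>n. \<alpha>n n - \<beta>n n) \<longlonglongrightarrow> \<alpha> - \<beta>" by (rule tendsto_diff[OF la lb])
  moreover have "\<alpha> - \<beta> > 2 * \<delta>" unfolding \<delta>_def using \<delta>0 \<delta>_def by simp
  ultimately have ev1: "eventually (\<lambda>n. \<alpha>n n - \<beta>n n > 2 * \<delta>) sequentially"
    by (rule order_tendstoD(1))
  have ev2: "eventually (\<lambda>n. n \<ge> d + 1 \<and> real n \<ge> c) sequentially"
    by (intro eventually_conj) real_asymp+
  define K where "K = c + 2^(d+1)*c^2 + real d + 1"
  have upper: "eventually (\<lambda>n. prob_Yd n d (c / real n) (\<lambda>Y. v_fun n d Y \<le> 0) \<le> K * real d^2 / (\<delta>^2 * real n)) sequentially"
    using ev1 ev2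
  proof eventually_elim
    case (elim n)
    show ?case unfolding K_def
      by (rule final_bound[OF d c0 \<delta>0]) (use elim in \<open>auto simp: \<alpha>n_def \<beta>n_def\<close>)
  qed
  have lower: "eventually (\<lambda>n. 0 \<le> prob_Yd n d (c / real n) (\<lambda>Y. v_fun n d Y \<le> 0)) sequentially"
    using ev2
  proof eventually_elim
    case (elim n)
    have "0 \<le> c / real n" "c / real n \<le> 1" using elim c0 by (auto simp: field_simps)
    thus ?case by (subst prob_Yd_eq) auto
  qed
  have "(\<lambda>n. (K * real d^2 / \<delta>^2) / real n) \<longlonglongrightarrow> 0" by (rule lim_const_over_n)
  hence "(\<lambda>n. K * real d^2 / (\<delta>^2 * real n)) \<longlonglongrightarrow> 0" by (simp add: field_simps)
  thus ?thesis by (rule tendsto_sandwich[OF lower upper tendsto_const])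
qed

end
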